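(* Let $G$ be a connected graph that is not complete and let $v\in V(G)$ be a universal vertex. Let $G_{\{v\}}$ be the graph obtained from $G$ by adding a new pendant vertex $x$ adjacent only to $v$. Then $\chi(\mathcal{R}(G))=\chi(\mathcal{R}(G_{\{v\}}))$.
   Context: For a connected graph $G$, a search tree on $G$ is a rooted tree with vertex set $V(G)$ defined recursively: its root is some vertex $r\in V(G)$, and the children of $r$ are the roots of search trees on the connected components of $G-r$. For a rooted tree $T$ and $w\in V(T)$, $T|w$ denotes the subtree rooted at $w$. Let $T$ be a search tree on $G$, let $v$ be a child of $u$ in $T$, and let $p$ be the parent of $u$ (if it exists). The $uv$-rotation transforms $T$ into the search tree $T'$ in which: $u$ is a child of $v$ and $v$ is a child of $p$ (or $v$ is the root if $u$ was the root); every subtree of $u$ in $T$ other than $T|v$ is a subtree of $u$ in $T'$; and every subtree $S$ of $v$ in $T$ is a subtree of $u$ in $T'$ if $u$ is adjacent in $G$ to some vertex of $S$, and a subtree of $v$ in $T'$ otherwise. The rotation graph $\mathcal{R}(G)$ is the graph whose vertices are the search trees on $G$, two being adjacent iff they differ by one rotation. $\chi$ denotes chromatic number. A vertex is universal if it is adjacent to all other vertices. *)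

theory Defs
  imports Main
begin

text \<open>Simple graphs: a vertex set V and an adjacency predicate E.
  Rooted trees on a vertex set V are represented by parent maps
  p :: 'a => 'a option (p x = None for the root and for x outside V).\<close>

definition induced :: "('a \<Rightarrow> 'a \<Rightarrow> bool) \<Rightarrow> 'a set \<Rightarrow> 'a \<Rightarrow> 'a \<Rightarrow> bool" where
  "induced E S a b \<longleftrightarrow> E a b \<and> a \<in> S \<and> b \<in> S"

definition connected_on :: "('a \<Rightarrow> 'a \<Rightarrow> bool) \<Rightarrow> 'a set \<Rightarrow> bool" where
  "connected_on E S \<longleftrightarrow> S \<noteq> {} \<and> (\<forall>a\<in>S. \<forall>b\<in>S. (induced E S)\<^sup>*\<^sup>* a b)"

definition components :: "('a \<Rightarrow> 'a \<Rightarrow> bool) \<Rightarrow> 'a set \<Rightarrow> 'a set set" where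
  "components E S = {C. \<exists>a\<in>S. C = {b. (induced E S)\<^sup>*\<^sup>* a b}}"

inductive search_tree :: "('a \<Rightarrow> 'a \<Rightarrow> bool) \<Rightarrow> 'a set \<Rightarrow> 'a \<Rightarrow> ('a \<Rightarrow> 'a option) \<Rightarrow> bool"
  for E where
  "\<lbrakk> connected_on E V; r \<in> V; p r = None; \<forall>x. x \<notin> V \<longrightarrow> p x = None;
     \<forall>C\<in>components E (V - {r}). \<exists>c\<in>C. p c = Some r \<and>
         search_tree E C c (\<lambda>x. if x \<in> C \<and> x \<noteq> c then p x else None) \<rbrakk>
   \<Longrightarrow> search_tree E V r p"

definition is_search_tree :: "('a \<Rightarrow> 'a \<Rightarrow> bool) \<Rightarrow> 'a set \<Rightarrow> ('a \<Rightarrow> 'a option) \<Rightarrow> bool" where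
  "is_search_tree E V p \<longleftrightarrow> (\<exists>r. search_tree E V r p)"

definition subtree :: "('a \<Rightarrow> 'a option) \<Rightarrow> 'a \<Rightarrow> 'a set" where
  "subtree p w = {x. (\<lambda>a b. p a = Some b)\<^sup>*\<^sup>* x w}"

definition rotate :: "('a \<Rightarrow> 'a \<Rightarrow> bool) \<Rightarrow> ('a \<Rightarrow> 'a option) \<Rightarrow> 'a \<Rightarrow> 'a \<Rightarrow> ('a \<Rightarrow> 'a option)" where
  "rotate E p u v = (\<lambda>x.
     if x = v then p u
     else if x = u then Some v
     else if p x = Some v \<and> (\<exists>y\<in>subtree p x. E u y) then Some u
     else p x)"

definition rot_step :: "('a \<Rightarrow> 'a \<Rightarrow> bool) \<Rightarrow> ('a \<Rightarrow> 'a option) \<Rightarrow> ('a \<Rightarrow> 'a option) \<Rightarrow> bool" where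
  "rot_step E p q \<longleftrightarrow> (\<exists>u v. p v = Some u \<and> q = rotate E p u v)"

definition rot_vertices :: "('a \<Rightarrow> 'a \<Rightarrow> bool) \<Rightarrow> 'a set \<Rightarrow> ('a \<Rightarrow> 'a option) set" where
  "rot_vertices E V = {p. is_search_tree E V p}"

definition rot_adj :: "('a \<Rightarrow> 'a \<Rightarrow> bool) \<Rightarrow> 'a set \<Rightarrow> ('a \<Rightarrow> 'a option) \<Rightarrow> ('a \<Rightarrow> 'a option) \<Rightarrow> bool" where
  "rot_adj E V p q \<longleftrightarrow> p \<in> rot_vertices E V \<and> q \<in> rot_vertices E V \<and>
     (rot_step E p q \<or> rot_step E q p)"

definition chromatic_number :: "'b set \<Rightarrow> ('b \<Rightarrow> 'b \<Rightarrow> bool) \<Rightarrow> nat" where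
  "chromatic_number W A = (LEAST k. \<exists>f :: 'b \<Rightarrow> nat.
      (\<forall>x\<in>W. f x < k) \<and> (\<forall>x\<in>W. \<forall>y\<in>W. A x y \<longrightarrow> f x \<noteq> f y))"

definition add_pendant :: "('a \<Rightarrow> 'a \<Rightarrow> bool) \<Rightarrow> 'a \<Rightarrow> 'a \<Rightarrow> 'a \<Rightarrow> 'a \<Rightarrow> bool" where
  "add_pendant E v x a b \<longleftrightarrow> (E a b \<and> a \<noteq> x \<and> b \<noteq> x) \<or> (a = x \<and> b = v) \<or> (a = v \<and> b = x)"

end

theory Submission
  imports Defs
begin

abbreviation par :: "('a \<Rightarrow> 'a option) \<Rightarrow> 'a \<Rightarrow> 'a \<Rightarrow> bool" where
  "par p \<equiv> (\<lambda>a b. p a = Some b)"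

abbreviation restr :: "('a \<Rightarrow> 'a option) \<Rightarrow> 'a set \<Rightarrow> 'a \<Rightarrow> 'a \<Rightarrow> 'a option" where
  "restr p C c \<equiv> (\<lambda>x. if x \<in> C \<and> x \<noteq> c then p x else None)"

definition compo :: "('a \<Rightarrow> 'a \<Rightarrow> bool) \<Rightarrow> 'a set \<Rightarrow> 'a \<Rightarrow> 'a set" where
  "compo E S a = {b. (induced E S)\<^sup>*\<^sup>* a b}"

lemma induced_in: "induced E S a b \<Longrightarrow> a \<in> S \<and> b \<in> S"
  by (simp add: induced_def)

lemma rtc_induced_in: "(induced E S)\<^sup>*\<^sup>* a b \<Longrightarrow> a \<in> S \<Longrightarrow> b \<in> S"
  by (induction rule: rtranclp_induct) (auto simp: induced_def)

lemma induced_sym: "\<forall>a b. E a b \<longrightarrow> E b a \<Longrightarrow> induced E S a b \<Longrightarrow> induced E S b a"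
  by (auto simp: induced_def)

lemma rtc_induced_sym:
  assumes "\<forall>a b. E a b \<longrightarrow> E b a" "(induced E S)\<^sup>*\<^sup>* a b"
  shows "(induced E S)\<^sup>*\<^sup>* b a"
  using assms(2)
proof (induction rule: rtranclp_induct)
  case base then show ?case by simp
next
  case (step y z)
  then show ?case using induced_sym[OF assms(1) step(2)]
    by (meson converse_rtranclp_into_rtranclp)
qed

lemma comp_in_components: "a \<in> S \<Longrightarrow> compo E S a \<in> components E S"
  by (auto simp: components_def compo_def)

lemma comp_self: "a \<in> S \<Longrightarrow> a \<in> compo E S a"
  by (auto simp: compo_def)

lemma comp_sub: "a \<in> S \<Longrightarrow> compo E S a \<subseteq> S"
  by (auto simp: compo_def intro: rtc_induced_in)

lemma components_sub: "C \<in> components E S \<Longrightarrow> C \<subseteq> S"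
  by (auto simp: components_def intro: rtc_induced_in)

lemma components_eq:
  assumes sym: "\<forall>a b. E a b \<longrightarrow> E b a" and C: "C \<in> components E S" and a: "a \<in> C"
  shows "C = compo E S a"
proof -
  obtain a0 where a0: "a0 \<in> S" "C = {b. (induced E S)\<^sup>*\<^sup>* a0 b}"
    using C by (auto simp: components_def)
  have 1: "(induced E S)\<^sup>*\<^sup>* a0 a" using a a0 by auto
  have 2: "(induced E S)\<^sup>*\<^sup>* a a0" using rtc_induced_sym[OF sym 1] .
  show ?thesis unfolding compo_def a0(2)
    using 1 2 by (auto intro: rtranclp_trans)
qed

lemma components_same:
  assumes sym: "\<forall>a b. E a b \<longrightarrow> E b a" and "C \<in> components E S" "D \<in> components E S"
    "a \<in> C" "a \<in> D"
  shows "C = D"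
  using components_eq[OF sym] assms by metis

lemma comp_edge:
  assumes "a \<in> compo E S a0" "b \<in> S" "a \<in> S" "E a b"
  shows "b \<in> compo E S a0"
  using assms by (auto simp: compo_def induced_def intro: rtranclp.rtrancl_into_rtrancl)

lemma components_edge:
  assumes sym: "\<forall>a b. E a b \<longrightarrow> E b a" and C: "C \<in> components E S" and "a \<in> C" "b \<in> S" "E a b"
  shows "b \<in> C"
  using assms components_eq[OF sym C] comp_edge components_sub by (metis in_mono)

lemma connected_components:
  assumes sym: "\<forall>a b. E a b \<longrightarrow> E b a" and "connected_on E S"
  shows "components E S = {S}"
proof -
  have "\<And>a. a \<in> S \<Longrightarrow> compo E S a = S"
    using assms by (auto simp: connected_on_def compo_def intro: rtc_induced_in)
  then show ?thesis using assms(2) unfolding components_def connected_on_def compo_def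
    by auto
qed

lemma induced_mono: "T \<subseteq> U \<Longrightarrow> induced E T a b \<Longrightarrow> induced E U a b"
  by (auto simp: induced_def)

lemma rtc_induced_mono: "T \<subseteq> U \<Longrightarrow> (induced E T)\<^sup>*\<^sup>* a b \<Longrightarrow> (induced E U)\<^sup>*\<^sup>* a b"
  by (metis (no_types, lifting) induced_mono mono_rtranclp)

lemma connected_sub_comp:
  assumes "connected_on E T" "T \<subseteq> U" "a \<in> T"
  shows "T \<subseteq> compo E U a"
  using assms by (auto simp: connected_on_def compo_def intro: rtc_induced_mono)

lemma st_basic: "search_tree E V r p \<Longrightarrow> r \<in> V \<and> p r = None \<and> (\<forall>y. y \<notin> V \<longrightarrow> p y = None) \<and> connected_on E V"
  by (auto elim: search_tree.cases)

lemma st_decomp: "search_tree E V r p \<Longrightarrow> C \<in> components E (V - {r}) \<Longrightarrow>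
    \<exists>c\<in>C. p c = Some r \<and> search_tree E C c (restr p C c)"
  by (auto elim: search_tree.cases)

lemma st_parent_aux: "search_tree E V r p \<Longrightarrow> (\<forall>a b. p a = Some b \<longrightarrow> a \<in> V \<and> b \<in> V \<and> a \<noteq> r)"
proof (induction rule: search_tree.induct)
  case (1 V r p)
  show ?case
  proof (intro allI impI)
    fix a b assume ab: "p a = Some b"
    have aV: "a \<in> V" using ab 1(4) by (cases "a \<in> V") auto
    have ar: "a \<noteq> r" using ab 1(3) by auto
    let ?C = "compo E (V - {r}) a"
    have C: "?C \<in> components E (V - {r})" using aV ar by (intro comp_in_components) simp
    then obtain c where c: "c \<in> ?C" "p c = Some r" "search_tree E ?C c (restr p ?C c)"
      "\<forall>a b. restr p ?C c a = Some b \<longrightarrow> a \<in> ?C \<and> b \<in> ?C \<and> a \<noteq> c"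
      using bspec[OF 1(5) C] by (elim bexE conjE) blast
    show "a \<in> V \<and> b \<in> V \<and> a \<noteq> r"
    proof (cases "a = c")
      case True then show ?thesis using ab c(2) aV ar 1(2) by simp
    next
      case False
      then have "restr p ?C c a = Some b" using ab comp_self[of a "V - {r}" E] aV ar by auto
      then have "b \<in> ?C" using c(4) by blast
      then show ?thesis using aV ar comp_sub[of a "V - {r}" E] by blast
    qed
  qed
qed

lemma st_parent: "search_tree E V r p \<Longrightarrow> p a = Some b \<Longrightarrow> a \<in> V \<and> b \<in> V \<and> a \<noteq> r"
  using st_parent_aux by metis


lemma st_hasparent_aux: "search_tree E V r p \<Longrightarrow> (\<forall>y\<in>V. y \<noteq> r \<longrightarrow> (\<exists>b. p y = Some b))"
proof (induction rule: search_tree.induct)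
  case (1 V r p)
  show ?case
  proof (intro ballI impI)
    fix y assume y: "y \<in> V" "y \<noteq> r"
    let ?C = "compo E (V - {r}) y"
    have C: "?C \<in> components E (V - {r})" using y by (intro comp_in_components) simp
    then obtain c where c: "c \<in> ?C" "p c = Some r"
      "\<forall>a\<in>?C. a \<noteq> c \<longrightarrow> (\<exists>b. restr p ?C c a = Some b)"
      using bspec[OF 1(5) C] by (elim bexE conjE) blast
    have yC: "y \<in> ?C" using y by (intro comp_self) simp
    show "\<exists>b. p y = Some b"
    proof (cases "y = c")
      case True then show ?thesis using c(2) by simp
    next
      case False
      then obtain b where "restr p ?C c y = Some b" using c(3) yC by blast
      then show ?thesis by (simp split: if_splits)
    qed
  qed
qed

lemma st_hasparent: "search_tree E V r p \<Longrightarrow> y \<in> V \<Longrightarrow> y \<noteq> r \<Longrightarrow> \<exists>b. p y = Some b"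
  using st_hasparent_aux by metis

lemma par_restr_mono: "(par (restr p C c))\<^sup>*\<^sup>* a b \<Longrightarrow> (par p)\<^sup>*\<^sup>* a b"
proof (induction rule: rtranclp_induct)
  case base then show ?case by simp
next
  case (step y z)
  then have "p y = Some z" by (simp split: if_splits)
  then show ?case using step(3) by (simp add: rtranclp.rtrancl_into_rtrancl)
qed

lemma st_reach_aux: "search_tree E V r p \<Longrightarrow> (\<forall>y\<in>V. (par p)\<^sup>*\<^sup>* y r)"
proof (induction rule: search_tree.induct)
  case (1 V r p)
  show ?case
  proof (intro ballI)
    fix y assume y: "y \<in> V"
    show "(par p)\<^sup>*\<^sup>* y r"
    proof (cases "y = r")
      case True then show ?thesis by simp
    next
      case False
      let ?C = "compo E (V - {r}) y"
      have C: "?C \<in> components E (V - {r})" using y False by (intro comp_in_components) simp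
      then obtain c where c: "c \<in> ?C" "p c = Some r"
        "\<forall>a\<in>?C. (par (restr p ?C c))\<^sup>*\<^sup>* a c"
        using bspec[OF 1(5) C] by (elim bexE conjE) blast
      have yC: "y \<in> ?C" using y False by (intro comp_self) simp
      have "(par (restr p ?C c))\<^sup>*\<^sup>* y c" using c(3) yC by blast
      then have "(par p)\<^sup>*\<^sup>* y c" by (rule par_restr_mono)
      then show ?thesis using c(2) by (simp add: rtranclp.rtrancl_into_rtrancl)
    qed
  qed
qed

lemma st_reach: "search_tree E V r p \<Longrightarrow> y \<in> V \<Longrightarrow> (par p)\<^sup>*\<^sup>* y r"
  using st_reach_aux by metis

lemma st_height_aux:
  assumes sym: "\<forall>a b. E a b \<longrightarrow> E b a"
  shows "search_tree E V r p \<Longrightarrow> \<exists>h::'a \<Rightarrow> nat. \<forall>a b. p a = Some b \<longrightarrow> h b < h a"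
proof (induction rule: search_tree.induct)
  case (1 V r p)
  have "\<forall>C\<in>components E (V - {r}). \<exists>hC::'a\<Rightarrow>nat. \<forall>a b. a \<in> C \<longrightarrow> p a = Some b \<longrightarrow> b \<noteq> r \<longrightarrow> b \<in> C \<and> hC b < hC a"
  proof
    fix C assume C: "C \<in> components E (V - {r})"
    then obtain c where c: "c \<in> C" "p c = Some r" "search_tree E C c (restr p C c)"
      "\<exists>h::'a\<Rightarrow>nat. \<forall>a b. restr p C c a = Some b \<longrightarrow> h b < h a"
      using bspec[OF 1(5) C] by (elim bexE conjE) blast
    obtain h :: "'a \<Rightarrow> nat" where h: "\<forall>a b. restr p C c a = Some b \<longrightarrow> h b < h a" using c(4) by blast
    show "\<exists>hC::'a\<Rightarrow>nat. \<forall>a b. a \<in> C \<longrightarrow> p a = Some b \<longrightarrow> b \<noteq> r \<longrightarrow> b \<in> C \<and> hC b < hC a"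
    proof (intro exI allI impI)
      fix a b assume ab: "a \<in> C" "p a = Some b" "b \<noteq> r"
      then have "a \<noteq> c" using c(2) by auto
      then have rab: "restr p C c a = Some b" using ab by simp
      show "b \<in> C \<and> h b < h a" using st_parent[OF c(3) rab] h rab by blast
    qed
  qed
  then have "\<exists>H::'a set \<Rightarrow> 'a \<Rightarrow> nat. \<forall>C\<in>components E (V - {r}). \<forall>a b. a \<in> C \<longrightarrow> p a = Some b \<longrightarrow> b \<noteq> r \<longrightarrow> b \<in> C \<and> H C b < H C a"
    by (rule bchoice)
  then obtain H :: "'a set \<Rightarrow> 'a \<Rightarrow> nat" where H: "\<forall>C\<in>components E (V - {r}). \<forall>a b. a \<in> C \<longrightarrow> p a = Some b \<longrightarrow> b \<noteq> r \<longrightarrow> b \<in> C \<and> H C b < H C a"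
    by blast
  define h where "h a = (if a = r then 0 else Suc (H (compo E (V - {r}) a) a))" for a
  show ?case
  proof (intro exI allI impI)
    fix a b assume ab: "p a = Some b"
    have aV: "a \<in> V" using ab 1(4) by (cases "a \<in> V") auto
    have ar: "a \<noteq> r" using ab 1(3) by auto
    let ?C = "compo E (V - {r}) a"
    have C: "?C \<in> components E (V - {r})" using aV ar by (intro comp_in_components) simp
    have aC: "a \<in> ?C" using aV ar by (intro comp_self) simp
    show "h b < h a"
    proof (cases "b = r")
      case True then show ?thesis using ar by (simp add: h_def)
    next
      case False
      have bC: "b \<in> ?C" and lt: "H ?C b < H ?C a" using H C aC ab False by blast+
      have "compo E (V - {r}) b = ?C" using components_eq[OF sym C bC] by simp
      then show ?thesis using lt False ar by (simp add: h_def)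
    qed
  qed
qed

lemma height_trancl: assumes "\<forall>a b. p a = Some b \<longrightarrow> h b < (h a :: nat)" "(par p)\<^sup>+\<^sup>+ a b" shows "h b < h a"
  using assms(2)
proof (induction rule: tranclp_induct)
  case (base y) then show ?case using assms(1) by blast
next
  case (step y z) then show ?case using assms(1) by (metis order.strict_trans)
qed

lemma st_acyclic:
  assumes sym: "\<forall>a b. E a b \<longrightarrow> E b a" and st: "search_tree E V r p"
  shows "\<not> (par p)\<^sup>+\<^sup>+ a a"
  using st_height_aux[OF sym st] height_trancl by (metis less_irrefl)

lemma acyc_antisym:
  assumes "\<forall>a. \<not> (par p)\<^sup>+\<^sup>+ a a" "(par p)\<^sup>*\<^sup>* a b" "(par p)\<^sup>*\<^sup>* b a"
  shows "a = b"
  using assms by (metis rtranclpD tranclp_rtranclp_tranclp)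

lemma acyc_noself: "\<forall>a. \<not> (par p)\<^sup>+\<^sup>+ a a \<Longrightarrow> p a \<noteq> Some a"
  by (metis tranclp.r_into_trancl)

lemma subtree_self: "y \<in> subtree p y"
  by (simp add: subtree_def r_into_rtranclp)

lemma subtree_trans: "a \<in> subtree p b \<Longrightarrow> b \<in> subtree p c \<Longrightarrow> a \<in> subtree p c"
  by (auto simp: subtree_def intro: rtranclp_trans)

lemma subtree_parent: "p a = Some b \<Longrightarrow> a \<in> subtree p b"
  by (simp add: subtree_def r_into_rtranclp)

lemma subtree_iff: "a \<in> subtree p y \<longleftrightarrow> (par p)\<^sup>*\<^sup>* a y"
  by (simp add: subtree_def r_into_rtranclp)

lemma subtree_unfold: "a \<in> subtree p y \<longleftrightarrow> a = y \<or> (\<exists>z. p z = Some y \<and> a \<in> subtree p z)"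
proof
  assume "a \<in> subtree p y"
  then have "(par p)\<^sup>*\<^sup>* a y" by (simp add: subtree_def)
  then show "a = y \<or> (\<exists>z. p z = Some y \<and> a \<in> subtree p z)"
    by (cases rule: rtranclp.cases) (auto simp: subtree_def)
next
  assume "a = y \<or> (\<exists>z. p z = Some y \<and> a \<in> subtree p z)"
  then show "a \<in> subtree p y"
    by (auto simp: subtree_def intro: rtranclp.rtrancl_into_rtrancl)
qed

lemma subtree_step: assumes "a \<in> subtree p y" "a \<noteq> y" "p a = Some b" shows "b \<in> subtree p y"
proof -
  have "(par p)\<^sup>*\<^sup>* a y" using assms(1) by (simp add: subtree_def)
  then show ?thesis
  proof (cases rule: converse_rtranclpE)
    case base then show ?thesis using assms(2) by simp
  next
    case (step a')
    then have "a' = b" using assms(3) by simp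
    then show ?thesis using step(2) by (simp add: subtree_def)
  qed
qed

lemma functional_linear:
  assumes "(par p)\<^sup>*\<^sup>* a b" "(par p)\<^sup>*\<^sup>* a c"
  shows "(par p)\<^sup>*\<^sup>* b c \<or> (par p)\<^sup>*\<^sup>* c b"
  using assms
proof (induction arbitrary: c rule: converse_rtranclp_induct)
  case base then show ?case by simp
next
  case (step y z)
  show ?case
  proof (cases "y = c")
    case True
    have "(par p)\<^sup>*\<^sup>* y b" using step(1,2) by (rule converse_rtranclp_into_rtranclp)
    then show ?thesis using True by blast
  next
    case False
    from step(4) have "(par p)\<^sup>*\<^sup>* z c"
    proof (cases rule: converse_rtranclpE)
      case base then show ?thesis using False by simp
    next
      case (step z')
      then show ?thesis using \<open>p y = Some z\<close> by simp
    qed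
    then show ?thesis using step(3) by blast
  qed
qed

lemma subtree_linear: assumes "a \<in> subtree p b" "a \<in> subtree p c" shows "b \<in> subtree p c \<or> c \<in> subtree p b"
  using functional_linear[of p a b c] assms by (simp add: subtree_def)

lemma subtree_none: assumes "a \<in> subtree p y" "p a = None" shows "a = y"
proof -
  have "(par p)\<^sup>*\<^sup>* a y" using assms(1) by (simp add: subtree_def)
  then show ?thesis
  proof (cases rule: converse_rtranclpE)
    case base then show ?thesis by simp
  next
    case (step a') then show ?thesis using assms(2) by simp
  qed
qed

lemma st_subtree_root: "search_tree E V r p \<Longrightarrow> subtree p r = V"
proof
  assume st: "search_tree E V r p"
  show "subtree p r \<subseteq> V"
  proof
    fix a assume a: "a \<in> subtree p r"
    show "a \<in> V"
    proof (cases "a \<in> V")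
      case False then have "p a = None" using st_basic[OF st] by blast
      then have "a = r" using subtree_none[OF a] by blast
      then show ?thesis using st_basic[OF st] by blast
    qed
  qed
  show "V \<subseteq> subtree p r" using st_reach[OF st] by (auto simp: subtree_def)
qed

lemma st_subtree_sub: "search_tree E V r p \<Longrightarrow> y \<in> V \<Longrightarrow> subtree p y \<subseteq> V"
proof
  fix a assume st: "search_tree E V r p" and y: "y \<in> V" and a: "a \<in> subtree p y"
  have "y \<in> subtree p r" using st_reach[OF st y] by (simp add: subtree_def)
  then have "a \<in> subtree p r" using subtree_trans[OF a] by blast
  then show "a \<in> V" using st_subtree_root[OF st] by blast
qed

lemma subtree_restr_mono: "a \<in> subtree (restr p C c) b \<Longrightarrow> a \<in> subtree p b"
proof -
  assume "a \<in> subtree (restr p C c) b"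
  then have "(par (restr p C c))\<^sup>*\<^sup>* a b" by (simp add: subtree_def)
  then have "(par p)\<^sup>*\<^sup>* a b" by (rule par_restr_mono)
  then show ?thesis by (simp add: subtree_def)
qed

lemma restr_subtree_eq:
  assumes acyc: "\<forall>a. \<not> (par p)\<^sup>+\<^sup>+ a a" and a: "a \<in> subtree p c"
  shows "subtree (restr p (subtree p c) c) a = subtree p a"
proof
  show "subtree (restr p (subtree p c) c) a \<subseteq> subtree p a"
    by (rule subsetI, erule subtree_restr_mono)
  show "subtree p a \<subseteq> subtree (restr p (subtree p c) c) a"
  proof
    fix b assume "b \<in> subtree p a"
    then have "(par p)\<^sup>*\<^sup>* b a" by (simp add: subtree_def)
    then show "b \<in> subtree (restr p (subtree p c) c) a"
    proof (induction rule: converse_rtranclp_induct)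
      case base then show ?case by (rule subtree_self)
    next
      case (step y z)
      have yz: "(par p)\<^sup>*\<^sup>* y a" using step(1,2) by (rule converse_rtranclp_into_rtranclp)
      have ac: "(par p)\<^sup>*\<^sup>* a c" using a by (simp add: subtree_def)
      have yc: "y \<in> subtree p c" using rtranclp_trans[OF yz ac] by (simp add: subtree_def)
      have "y \<noteq> c"
      proof
        assume "y = c"
        have "(par p)\<^sup>*\<^sup>* z c" using rtranclp_trans[OF step(2) ac] .
        then have "(par p)\<^sup>+\<^sup>+ y c" by (rule rtranclp_into_tranclp2[of "par p", OF step(1)])
        then show False using acyc \<open>y = c\<close> by blast
      qed
      then have "restr p (subtree p c) c y = Some z" using yc step(1) by simp
      then show ?case using step(3) unfolding subtree_def
        by (simp add: converse_rtranclp_into_rtranclp)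
    qed
  qed
qed

lemma st_child_comp:
  assumes sym: "\<forall>a b. E a b \<longrightarrow> E b a" and st: "search_tree E V r p"
    and C: "C \<in> components E (V - {r})" and c: "c \<in> C" "p c = Some r"
    and sub: "search_tree E C c (restr p C c)"
  shows "subtree p c = C"
proof
  have acyc: "\<forall>a. \<not> (par p)\<^sup>+\<^sup>+ a a" using st_acyclic[OF sym st] by blast
  show "C \<subseteq> subtree p c"
  proof
    fix a assume "a \<in> C"
    then have "(par (restr p C c))\<^sup>*\<^sup>* a c" by (rule st_reach[OF sub])
    then show "a \<in> subtree p c" using par_restr_mono by (simp add: subtree_def)
  qed
  show "subtree p c \<subseteq> C"
  proof
    fix b assume b: "b \<in> subtree p c"
    have CV: "C \<subseteq> V - {r}" using C by (rule components_sub)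
    have cV: "c \<in> V" using c CV by blast
    have bV: "b \<in> V" using st_subtree_sub[OF st cV] b by blast
    have br: "b \<noteq> r"
    proof
      assume "b = r"
      then have "(par p)\<^sup>*\<^sup>* r c" using b by (simp add: subtree_def)
      then have "(par p)\<^sup>+\<^sup>+ c c" by (rule rtranclp_into_tranclp2[of "par p", OF c(2)])
      then show False using acyc by blast
    qed
    let ?C' = "compo E (V - {r}) b"
    have C': "?C' \<in> components E (V - {r})" using bV br by (intro comp_in_components) simp
    have bC': "b \<in> ?C'" using bV br by (intro comp_self) simp
    obtain c' where c': "c' \<in> ?C'" "p c' = Some r" "search_tree E ?C' c' (restr p ?C' c')"
      using st_decomp[OF st C'] by blast
    have "(par (restr p ?C' c'))\<^sup>*\<^sup>* b c'" using st_reach[OF c'(3) bC'] .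
    then have bc': "b \<in> subtree p c'" using par_restr_mono by (simp add: subtree_def)
    have "c = c'"
    proof (rule ccontr)
      assume ne: "c \<noteq> c'"
      have "c \<in> subtree p c' \<or> c' \<in> subtree p c" using subtree_linear[OF b bc'] by blast
      then show False
      proof
        assume cc: "c \<in> subtree p c'"
        have "r \<in> subtree p c'" using subtree_step[OF cc ne c(2)] .
        then have "(par p)\<^sup>*\<^sup>* r c'" by (simp add: subtree_def)
        then have "(par p)\<^sup>+\<^sup>+ c' c'" by (rule rtranclp_into_tranclp2[of "par p", OF c'(2)])
        then show False using acyc by blast
      next
        assume cc: "c' \<in> subtree p c"
        have "r \<in> subtree p c" using subtree_step[OF cc _ c'(2)] ne by blast
        then have "(par p)\<^sup>*\<^sup>* r c" by (simp add: subtree_def)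
        then have "(par p)\<^sup>+\<^sup>+ c c" by (rule rtranclp_into_tranclp2[of "par p", OF c(2)])
        then show False using acyc by blast
      qed
    qed
    then have "?C' = C" using components_same[OF sym C' C] c'(1) c(1) by blast
    then show "b \<in> C" using bC' by simp
  qed
qed

lemma st_rebuild:
  assumes "connected_on E V" "r \<in> V" "p r = None" "\<forall>x. x \<notin> V \<longrightarrow> p x = None"
    "\<forall>C\<in>components E (V - {r}). \<exists>c\<in>C. p c = Some r \<and> search_tree E C c (restr p C c) \<and> Q C c"
  shows "search_tree E V r p"
proof (rule search_tree.intros[OF assms(1-4)])
  show "\<forall>C\<in>components E (V - {r}). \<exists>c\<in>C. p c = Some r \<and> search_tree E C c (restr p C c)"
    using assms(5) by blast
qed

lemma st_sub_aux:
  assumes sym: "\<forall>a b. E a b \<longrightarrow> E b a"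
  shows "search_tree E V r p \<Longrightarrow> \<forall>y\<in>V. search_tree E (subtree p y) y (restr p (subtree p y) y)"
proof (induction rule: search_tree.induct)
  case (1 V r p)
  have st: "search_tree E V r p" using st_rebuild[OF 1(1-4)] 1(5) by blast
  have acyc: "\<forall>a. \<not> (par p)\<^sup>+\<^sup>+ a a" using st_acyclic[OF sym st] by blast
  show ?case
  proof
    fix y assume y: "y \<in> V"
    show "search_tree E (subtree p y) y (restr p (subtree p y) y)"
    proof (cases "y = r")
      case True
      have "restr p V r = p"
      proof
        fix x show "restr p V r x = p x" using 1(3,4) by (cases "x \<in> V"; cases "x = r") auto
      qed
      then show ?thesis using True st st_subtree_root[OF st] by simp
    next
      case False
      let ?C = "compo E (V - {r}) y"
      have C: "?C \<in> components E (V - {r})" using y False by (intro comp_in_components) simp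
      have yC: "y \<in> ?C" using y False by (intro comp_self) simp
      obtain c where c: "c \<in> ?C" "p c = Some r" "search_tree E ?C c (restr p ?C c)"
        "\<forall>y\<in>?C. search_tree E (subtree (restr p ?C c) y) y (restr (restr p ?C c) (subtree (restr p ?C c) y) y)"
        using bspec[OF 1(5) C] by (elim bexE conjE) blast
      have Cc: "subtree p c = ?C" using st_child_comp[OF sym st C c(1,2,3)] .
      have yc: "y \<in> subtree p c" using Cc yC by simp
      have e1: "subtree (restr p ?C c) y = subtree p y"
        using restr_subtree_eq[OF acyc yc] unfolding Cc .
      have e2: "restr (restr p ?C c) (subtree p y) y = restr p (subtree p y) y"
      proof (rule ext)
        fix x
        show "restr (restr p ?C c) (subtree p y) y x = restr p (subtree p y) y x"
        proof (cases "x \<in> subtree p y \<and> x \<noteq> y")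
          case True
          then have xy: "x \<in> subtree p y" and xny: "x \<noteq> y" by simp_all
          have xc: "x \<in> subtree p c" by (rule subtree_trans[OF xy yc])
          have "x \<noteq> c"
          proof
            assume xc': "x = c"
            have 1: "(par p)\<^sup>*\<^sup>* c y" using xy xc' by (simp add: subtree_def)
            have 2: "(par p)\<^sup>*\<^sup>* y c" using yc by (simp add: subtree_def)
            have "c = y" by (rule acyc_antisym[OF acyc 1 2])
            then show False using xny xc' by simp
          qed
          moreover have "x \<in> ?C" using xc unfolding Cc .
          ultimately show ?thesis using xy xny by simp
        next
          case False then show ?thesis by auto
        qed
      qed
      have "search_tree E (subtree (restr p ?C c) y) y (restr (restr p ?C c) (subtree (restr p ?C c) y) y)"
        using c(4) yC by blast
      then show ?thesis unfolding e1 e2 .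
    qed
  qed
qed

lemma st_sub:
  assumes sym: "\<forall>a b. E a b \<longrightarrow> E b a" and "search_tree E V r p" "y \<in> V"
  shows "search_tree E (subtree p y) y (restr p (subtree p y) y)"
  using st_sub_aux[OF sym assms(2)] assms(3) by blast

lemma st_acyc:
  assumes sym: "\<forall>a b. E a b \<longrightarrow> E b a" and "search_tree E V r p"
  shows "\<forall>a. \<not> (par p)\<^sup>+\<^sup>+ a a"
  using st_acyclic[OF assms] by blast

lemma st_connected:
  assumes sym: "\<forall>a b. E a b \<longrightarrow> E b a" and "search_tree E V r p" "y \<in> V"
  shows "connected_on E (subtree p y)"
  using st_basic[OF st_sub[OF assms]] by blast

lemma st_children:
  assumes sym: "\<forall>a b. E a b \<longrightarrow> E b a" and st: "search_tree E V r p" and cy: "p c = Some y"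
  shows "subtree p c \<in> components E (subtree p y - {y})"
proof -
  have acyc: "\<forall>a. \<not> (par p)\<^sup>+\<^sup>+ a a" using st_acyc[OF sym st] .
  have yV: "y \<in> V" using st_parent[OF st cy] by blast
  let ?T = "subtree p y"
  let ?q = "restr p ?T y"
  have stT: "search_tree E ?T y ?q" using st_sub[OF sym st yV] .
  have cT: "c \<in> ?T" using cy by (rule subtree_parent)
  have cy': "c \<noteq> y" using acyc_noself[OF acyc] cy by metis
  let ?C = "compo E (?T - {y}) c"
  have C: "?C \<in> components E (?T - {y})" using cT cy' by (intro comp_in_components) simp
  have cC: "c \<in> ?C" using cT cy' by (intro comp_self) simp
  obtain c' where c': "c' \<in> ?C" "?q c' = Some y" "search_tree E ?C c' (restr ?q ?C c')"
    using st_decomp[OF stT C] by blast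
  have "c' = c"
  proof (rule ccontr)
    assume ne: "c' \<noteq> c"
    have "restr ?q ?C c' c = Some y" using ne cC cT cy' cy by simp
    then have "y \<in> ?C" using st_parent[OF c'(3)] by blast
    then show False using components_sub[OF C] by blast
  qed
  then have e: "subtree ?q c = ?C" using st_child_comp[OF sym stT C] c' by blast
  have "subtree ?q c = subtree p c" using restr_subtree_eq[OF acyc cT] .
  then show ?thesis using e C by simp
qed

lemma st_comp_child:
  assumes sym: "\<forall>a b. E a b \<longrightarrow> E b a" and st: "search_tree E V r p" and yV: "y \<in> V"
    and C: "C \<in> components E (subtree p y - {y})"
  shows "\<exists>c. p c = Some y \<and> subtree p c = C"
proof -
  have acyc: "\<forall>a. \<not> (par p)\<^sup>+\<^sup>+ a a" using st_acyc[OF sym st] .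
  let ?T = "subtree p y"
  let ?q = "restr p ?T y"
  have stT: "search_tree E ?T y ?q" using st_sub[OF sym st yV] .
  obtain c where c: "c \<in> C" "?q c = Some y" "search_tree E C c (restr ?q C c)"
    using st_decomp[OF stT C] by blast
  have e: "subtree ?q c = C" using st_child_comp[OF sym stT C c(1,2,3)] .
  have cT: "c \<in> ?T" using c(1) components_sub[OF C] by blast
  have "subtree ?q c = subtree p c" using restr_subtree_eq[OF acyc cT] .
  moreover have "p c = Some y" using c(2) by (simp split: if_splits)
  ultimately show ?thesis using e by metis
qed

lemma st_comparable_aux:
  assumes sym: "\<forall>a b. E a b \<longrightarrow> E b a"
  shows "search_tree E V r p \<Longrightarrow> \<forall>a b. E a b \<longrightarrow> a \<in> V \<longrightarrow> b \<in> V \<longrightarrow> a \<in> subtree p b \<or> b \<in> subtree p a"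
proof (induction rule: search_tree.induct)
  case (1 V r p)
  have st: "search_tree E V r p" using st_rebuild[OF 1(1-4)] 1(5) by blast
  have root: "subtree p r = V" using st_subtree_root[OF st] .
  show ?case
  proof (intro allI impI)
    fix a b assume ab: "E a b" "a \<in> V" "b \<in> V"
    show "a \<in> subtree p b \<or> b \<in> subtree p a"
    proof (cases "a = r \<or> b = r")
      case True then show ?thesis using root ab by blast
    next
      case False
      let ?C = "compo E (V - {r}) a"
      have C: "?C \<in> components E (V - {r})" using ab False by (intro comp_in_components) simp
      have aC: "a \<in> ?C" using ab False by (intro comp_self) simp
      have bC: "b \<in> ?C" using components_edge[OF sym C aC _ ab(1)] ab False by blast
      obtain c where c: "c \<in> ?C" "p c = Some r"
        "\<forall>a b. E a b \<longrightarrow> a \<in> ?C \<longrightarrow> b \<in> ?C \<longrightarrow> a \<in> subtree (restr p ?C c) b \<or> b \<in> subtree (restr p ?C c) a"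
        using bspec[OF 1(5) C] by (elim bexE conjE) blast
      have "a \<in> subtree (restr p ?C c) b \<or> b \<in> subtree (restr p ?C c) a" using c(3) ab(1) aC bC by blast
      then show ?thesis by (elim disjE) (drule subtree_restr_mono, simp)+
    qed
  qed
qed

lemma st_comparable:
  assumes sym: "\<forall>a b. E a b \<longrightarrow> E b a" and "search_tree E V r p" "E a b" "a \<in> V" "b \<in> V"
  shows "a \<in> subtree p b \<or> b \<in> subtree p a"
  using st_comparable_aux[OF sym assms(2)] assms(3-5) by blast

lemma par_restr_mono_trancl: "(par (restr p C c))\<^sup>+\<^sup>+ a b \<Longrightarrow> (par p)\<^sup>+\<^sup>+ a b"
proof (induction rule: tranclp_induct)
  case (base y)
  then have "p a = Some y" by (simp split: if_splits)
  then show ?case by (rule tranclp.r_into_trancl)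
next
  case (step y z)
  then have "p y = Some z" by (simp split: if_splits)
  then show ?case using step(3) by (simp add: tranclp.trancl_into_trancl)
qed

lemma ch_search_tree_aux:
  assumes sym: "\<forall>a b. E a b \<longrightarrow> E b a"
  shows "\<And>S r p. card S = n \<Longrightarrow> finite S \<Longrightarrow> r \<in> S \<Longrightarrow> p r = None \<Longrightarrow> (\<forall>y. y \<notin> S \<longrightarrow> p y = None) \<Longrightarrow>
    (\<forall>a\<in>S. (par p)\<^sup>*\<^sup>* a r) \<Longrightarrow> (\<forall>a. \<not> (par p)\<^sup>+\<^sup>+ a a) \<Longrightarrow>
    (\<forall>y\<in>S. connected_on E (subtree p y)) \<Longrightarrow>
    (\<forall>a\<in>S. \<forall>b\<in>S. E a b \<longrightarrow> a \<in> subtree p b \<or> b \<in> subtree p a) \<Longrightarrow> search_tree E S r p"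
proof (induction n rule: less_induct)
  case (less n S r p)
  note fin = less(3) and rS = less(4) and pr = less(5) and out = less(6) and reach = less(7)
    and acyc = less(8) and conn = less(9) and cmp = less(10)
  have sub_in: "\<And>a y. a \<in> subtree p y \<Longrightarrow> y \<in> S \<Longrightarrow> a \<in> S"
  proof -
    fix a y assume a: "a \<in> subtree p y" and y: "y \<in> S"
    show "a \<in> S"
    proof (rule ccontr)
      assume "a \<notin> S"
      then have "p a = None" using out by blast
      then have "a = y" using subtree_none[OF a] by blast
      then show False using y \<open>a \<notin> S\<close> by simp
    qed
  qed
  have root: "subtree p r = S"
  proof
    show "subtree p r \<subseteq> S" using sub_in rS by blast
    show "S \<subseteq> subtree p r" using reach by (auto simp: subtree_def)
  qed
  have connS: "connected_on E S" using conn rS root by metis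
  show ?case
  proof (rule search_tree.intros[OF connS rS pr out])
    show "\<forall>C\<in>components E (S - {r}). \<exists>c\<in>C. p c = Some r \<and> search_tree E C c (restr p C c)"
    proof
      fix C assume C: "C \<in> components E (S - {r})"
      obtain a0 where a0: "a0 \<in> S - {r}" "C = compo E (S - {r}) a0"
        using C by (auto simp: components_def compo_def)
      have "a0 \<in> subtree p r" using root a0 by blast
      then obtain c where c: "p c = Some r" "a0 \<in> subtree p c"
        using subtree_unfold[of a0 p r] a0(1) by blast
      have cS: "c \<in> S" using c(1) out by (metis option.distinct(1))
      have cr: "c \<noteq> r" using c(1) pr by auto
      have sub1: "subtree p c \<subseteq> S - {r}"
      proof
        fix b assume b: "b \<in> subtree p c"
        have "b \<in> S" using sub_in[OF b cS] .
        moreover have "b \<noteq> r"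
        proof
          assume "b = r"
          then have "(par p)\<^sup>*\<^sup>* r c" using b by (simp add: subtree_def)
          then have "(par p)\<^sup>+\<^sup>+ c c" by (rule rtranclp_into_tranclp2[of "par p", OF c(1)])
          then show False using acyc by blast
        qed
        ultimately show "b \<in> S - {r}" by blast
      qed
      have e1: "subtree p c \<subseteq> C"
        using connected_sub_comp[OF conn[rule_format, OF cS] sub1 c(2)] a0(2) by simp
      have e2: "C \<subseteq> subtree p c"
      proof
        fix b assume "b \<in> C"
        then have "(induced E (S - {r}))\<^sup>*\<^sup>* a0 b" using a0(2) by (simp add: compo_def)
        then show "b \<in> subtree p c"
        proof (induction rule: rtranclp_induct)
          case base then show ?case using c(2) .
        next
          case (step t t')
          have tt': "E t t'" "t \<in> S - {r}" "t' \<in> S - {r}" using step(2) by (simp_all add: induced_def)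
          have tS: "t \<in> S" "t' \<in> S" using tt' by simp_all
          have "t \<in> subtree p t' \<or> t' \<in> subtree p t" using cmp[rule_format, OF tS tt'(1)] .
          then show ?case
          proof
            assume "t' \<in> subtree p t"
            then show ?thesis by (rule subtree_trans[OF _ step(3)])
          next
            assume tt: "t \<in> subtree p t'"
            have "t' \<in> subtree p c \<or> c \<in> subtree p t'" using subtree_linear[OF tt step(3)] .
            then show ?thesis
            proof
              assume ct: "c \<in> subtree p t'"
              show ?thesis
              proof (cases "c = t'")
                case True then show ?thesis using subtree_self by metis
              next
                case False
                have "r \<in> subtree p t'" using subtree_step[OF ct False c(1)] .
                then have "r = t'" using subtree_none pr by metis
                then show ?thesis using tt' by simp
              qed
            qed
          qed
        qed
      qed
      have Ceq: "subtree p c = C" using e1 e2 by blast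
      have cC: "c \<in> C" using Ceq subtree_self by metis
      have eqsub: "\<And>a. a \<in> C \<Longrightarrow> subtree (restr p C c) a = subtree p a"
      proof -
        fix a assume "a \<in> C"
        then have "a \<in> subtree p c" using Ceq by simp
        from restr_subtree_eq[OF acyc this] show "subtree (restr p C c) a = subtree p a"
          unfolding Ceq .
      qed
      have CS: "C \<subseteq> S" using sub1 Ceq by blast
      have cardC: "card C < n" using less(2) fin CS cr rS
        by (metis Ceq psubset_card_mono psubsetI sub1 subset_Diff_insert)
      have "search_tree E C c (restr p C c)"
      proof (rule less(1)[OF cardC refl])
        show "finite C" using fin CS by (rule finite_subset[rotated])
        show "c \<in> C" by (rule cC)
        show "restr p C c c = None" by simp
        show "\<forall>y. y \<notin> C \<longrightarrow> restr p C c y = None" by simp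
        show "\<forall>a\<in>C. (par (restr p C c))\<^sup>*\<^sup>* a c"
        proof
          fix a assume "a \<in> C"
          then have "a \<in> subtree (restr p C c) c" using eqsub[OF cC] Ceq by simp
          then show "(par (restr p C c))\<^sup>*\<^sup>* a c" by (simp add: subtree_def)
        qed
        show "\<forall>a. \<not> (par (restr p C c))\<^sup>+\<^sup>+ a a"
        proof (intro allI notI)
          fix a assume "(par (restr p C c))\<^sup>+\<^sup>+ a a"
          then have "(par p)\<^sup>+\<^sup>+ a a" by (rule par_restr_mono_trancl)
          then show False using acyc by blast
        qed
        show "\<forall>y\<in>C. connected_on E (subtree (restr p C c) y)"
          using eqsub conn CS by auto
        show "\<forall>a\<in>C. \<forall>b\<in>C. E a b \<longrightarrow> a \<in> subtree (restr p C c) b \<or> b \<in> subtree (restr p C c) a"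
        proof (intro ballI impI)
          fix a b assume ab: "a \<in> C" "b \<in> C" "E a b"
          have "a \<in> S" "b \<in> S" using ab CS by blast+
          from cmp[rule_format, OF this ab(3)]
          show "a \<in> subtree (restr p C c) b \<or> b \<in> subtree (restr p C c) a"
            using eqsub[OF ab(1)] eqsub[OF ab(2)] by simp
        qed
      qed
      then show "\<exists>c\<in>C. p c = Some r \<and> search_tree E C c (restr p C c)" using cC c(1) by blast
    qed
  qed
qed

lemma ch_search_tree:
  assumes sym: "\<forall>a b. E a b \<longrightarrow> E b a" and "finite S" "r \<in> S" "p r = None" "\<forall>y. y \<notin> S \<longrightarrow> p y = None"
    "\<forall>a\<in>S. (par p)\<^sup>*\<^sup>* a r" "\<forall>a. \<not> (par p)\<^sup>+\<^sup>+ a a"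
    "\<forall>y\<in>S. connected_on E (subtree p y)"
    "\<forall>a\<in>S. \<forall>b\<in>S. E a b \<longrightarrow> a \<in> subtree p b \<or> b \<in> subtree p a"
  shows "search_tree E S r p"
  using ch_search_tree_aux[OF sym refl assms(2-)] .


lemma subtree_leaf: "\<forall>z. p z \<noteq> Some y \<Longrightarrow> subtree p y = {y}"
  using subtree_unfold[of _ p y] by blast

lemma subtree_one_child:
  assumes "p c = Some y" "\<forall>z. p z = Some y \<longrightarrow> z = c"
  shows "subtree p y = insert y (subtree p c)"
  using subtree_unfold[of _ p y] assms by blast

lemma parent_subtree_ancestor:
  assumes "p a = Some b" "a \<in> subtree p y" "a \<noteq> y"
  shows "b \<in> subtree p y"
  using subtree_step[OF assms(2,3,1)] .

lemma spt: "p a = Some b \<Longrightarrow> b \<in> subtree p y \<Longrightarrow> a \<in> subtree p y"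
  by (rule subtree_trans[OF subtree_parent])

context
  fixes E :: "'a \<Rightarrow> 'a \<Rightarrow> bool" and p :: "'a \<Rightarrow> 'a option" and u w :: 'a
  assumes pw: "p w = Some u" and uw: "u \<noteq> w"
begin

lemma rot_w: "rotate E p u w w = p u" by (simp add: rotate_def)
lemma rot_u: "rotate E p u w u = Some w" using uw by (simp add: rotate_def)
lemma rot_o: "z \<noteq> u \<Longrightarrow> z \<noteq> w \<Longrightarrow> rotate E p u w z =
   (if p z = Some w \<and> (\<exists>t\<in>subtree p z. E u t) then Some u else p z)"
  by (simp add: rotate_def)

lemma rot_subtree_other:
  assumes y: "y \<noteq> u" "y \<noteq> w"
  shows "subtree (rotate E p u w) y = subtree p y"
proof
  let ?q = "rotate E p u w"
  show "subtree ?q y \<subseteq> subtree p y"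
  proof
    fix a assume "a \<in> subtree ?q y"
    then have "(par ?q)\<^sup>*\<^sup>* a y" by (simp add: subtree_def)
    then show "a \<in> subtree p y"
    proof (induction rule: converse_rtranclp_induct)
      case base then show ?case by (rule subtree_self)
    next
      case (step a b)
      show ?case
      proof (cases "a = w")
        case True
        then have "p u = Some b" using step(1) rot_w by simp
        then have "u \<in> subtree p y" using step(3) by (rule spt)
        then show ?thesis using True spt[of p w u, OF pw] by simp
      next
        case aw: False
        show ?thesis
        proof (cases "a = u")
          case True
          then have "b = w" using step(1) rot_u by simp
          then have "w \<in> subtree p y" using step(3) by simp
          from subtree_step[OF this y(2)[symmetric] pw] show ?thesis using True by simp
        next
          case au: False
          show ?thesis
          proof (cases "p a = Some w \<and> (\<exists>t\<in>subtree p a. E u t)")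
            case True
            then have "b = u" using step(1) rot_o[OF au aw] by simp
            then have 1: "u \<in> subtree p y" using step(3) by simp
            have 2: "w \<in> subtree p u" using pw by (rule subtree_parent)
            have 3: "a \<in> subtree p w" using True by (simp add: subtree_parent)
            show ?thesis by (rule subtree_trans[OF subtree_trans[OF 3 2] 1])
          next
            case False
            then have "rotate E p u w a = p a" unfolding rot_o[OF au aw] by (rule if_not_P)
            then have "p a = Some b" using step(1) by simp
            then show ?thesis using step(3) by (rule spt)
          qed
        qed
      qed
    qed
  qed
  show "subtree p y \<subseteq> subtree ?q y"
  proof
    fix a assume "a \<in> subtree p y"
    then have "(par p)\<^sup>*\<^sup>* a y" by (simp add: subtree_def)
    then show "a \<in> subtree ?q y"
    proof (induction rule: converse_rtranclp_induct)
      case base then show ?case by (rule subtree_self)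
    next
      case (step a b)
      show ?case
      proof (cases "a = w")
        case True
        then have "b = u" using step(1) pw by simp
        then have uy: "u \<in> subtree ?q y" using step(3) by simp
        from subtree_step[OF uy y(1)[symmetric] rot_u] show ?thesis using True by simp
      next
        case aw: False
        show ?thesis
        proof (cases "a = u")
          case True
          then have "?q w = Some b" using step(1) rot_w by simp
          then have "w \<in> subtree ?q y" using step(3) by (rule spt)
          then show ?thesis using True spt[of "rotate E p u w" u w, OF rot_u] by simp
        next
          case au: False
          show ?thesis
          proof (cases "p a = Some w \<and> (\<exists>t\<in>subtree p a. E u t)")
            case True
            then have qa: "?q a = Some u" using rot_o[OF au aw] by simp
            have "b = w" using True step(1) by simp
            then have "w \<in> subtree ?q y" using step(3) by simp
            then have "u \<in> subtree ?q y" by (rule spt[of "rotate E p u w" u w, OF rot_u])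
            then show ?thesis by (rule spt[of "rotate E p u w" a u, OF qa])
          next
            case False
            then have "rotate E p u w a = p a" unfolding rot_o[OF au aw] by (rule if_not_P)
            then have "?q a = Some b" using step(1) by simp
            then show ?thesis using step(3) by (rule spt)
          qed
        qed
      qed
    qed
  qed
qed

lemma rot_subtree_w:
  assumes acyc: "\<forall>a. \<not> (par p)\<^sup>+\<^sup>+ a a"
  shows "subtree (rotate E p u w) w = subtree p u"
proof
  let ?q = "rotate E p u w"
  show "subtree ?q w \<subseteq> subtree p u"
  proof
    fix a assume "a \<in> subtree ?q w"
    then have "(par ?q)\<^sup>*\<^sup>* a w" by (simp add: subtree_def)
    then show "a \<in> subtree p u"
    proof (induction rule: converse_rtranclp_induct)
      case base then show ?case using pw by (rule subtree_parent)
    next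
      case (step a b)
      show ?case
      proof (cases "a = w")
        case True
        then have pu: "p u = Some b" using step(1) rot_w by simp
        have "(par p)\<^sup>*\<^sup>* b u" using step(3) by (simp add: subtree_def)
        then have "(par p)\<^sup>+\<^sup>+ u u" by (rule rtranclp_into_tranclp2[of "par p", OF pu])
        then show ?thesis using acyc by blast
      next
        case aw: False
        show ?thesis
        proof (cases "a = u")
          case True then show ?thesis by (simp add: subtree_self)
        next
          case au: False
          show ?thesis
          proof (cases "p a = Some w \<and> (\<exists>t\<in>subtree p a. E u t)")
            case True
            have 2: "w \<in> subtree p u" using pw by (rule subtree_parent)
            have 3: "a \<in> subtree p w" using True by (simp add: subtree_parent)
            show ?thesis by (rule subtree_trans[OF 3 2])
          next
            case False
            then have "rotate E p u w a = p a" unfolding rot_o[OF au aw] by (rule if_not_P)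
            then have "p a = Some b" using step(1) by simp
            then show ?thesis using step(3) by (rule spt)
          qed
        qed
      qed
    qed
  qed
  show "subtree p u \<subseteq> subtree ?q w"
  proof
    fix a assume "a \<in> subtree p u"
    then have "(par p)\<^sup>*\<^sup>* a u" by (simp add: subtree_def)
    then show "a \<in> subtree ?q w"
    proof (induction rule: converse_rtranclp_induct)
      case base then show ?case using rot_u by (rule subtree_parent)
    next
      case (step a b)
      show ?case
      proof (cases "a = w")
        case True then show ?thesis by (simp add: subtree_self)
      next
        case aw: False
        show ?thesis
        proof (cases "a = u")
          case True then show ?thesis using rot_u by (simp add: subtree_parent)
        next
          case au: False
          show ?thesis
          proof (cases "p a = Some w \<and> (\<exists>t\<in>subtree p a. E u t)")
            case True
            then have qa: "?q a = Some u" using rot_o[OF au aw] by simp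
            have "u \<in> subtree ?q w" using rot_u by (rule subtree_parent)
            then show ?thesis by (rule spt[of "rotate E p u w" a u, OF qa])
          next
            case False
            then have "rotate E p u w a = p a" unfolding rot_o[OF au aw] by (rule if_not_P)
            then have "?q a = Some b" using step(1) by simp
            then show ?thesis using step(3) by (rule spt)
          qed
        qed
      qed
    qed
  qed
qed

end

locale pend =
  fixes E :: "'a \<Rightarrow> 'a \<Rightarrow> bool" and V :: "'a set" and v x :: 'a
  assumes finV: "finite V"
    and inV: "\<forall>a b. E a b \<longrightarrow> a \<in> V \<and> b \<in> V"
    and symE: "\<forall>a b. E a b \<longrightarrow> E b a"
    and connV: "connected_on E V"
    and vV: "v \<in> V" and univ: "\<forall>w\<in>V. w \<noteq> v \<longrightarrow> E v w"
    and xV: "x \<notin> V"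
begin

abbreviation F where "F \<equiv> add_pendant E v x"
abbreviation W where "W \<equiv> insert x V"

definition phi :: "('a \<Rightarrow> 'a option) \<Rightarrow> ('a \<Rightarrow> 'a option)" where
  "phi p = (\<lambda>y. if y = x then None else if p y = Some x then p x else p y)"

lemma xv: "x \<noteq> v" using xV vV by blast

lemma Ex1: "\<not> E x b" using inV xV by blast
lemma Ex2: "\<not> E a x" using inV xV by blast

lemma symF: "\<forall>a b. F a b \<longrightarrow> F b a"
  using symE by (auto simp: add_pendant_def)

lemma F_x1: "F x b \<longleftrightarrow> b = v" using xv Ex1 by (auto simp: add_pendant_def)
lemma F_x2: "F a x \<longleftrightarrow> a = v" using xv Ex2 by (auto simp: add_pendant_def)
lemma F_nx: "a \<noteq> x \<Longrightarrow> b \<noteq> x \<Longrightarrow> F a b \<longleftrightarrow> E a b" by (auto simp: add_pendant_def)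

lemma univF: "w \<in> W \<Longrightarrow> w \<noteq> v \<Longrightarrow> F v w"
  using univ xv by (auto simp: add_pendant_def)

lemma univF': "w \<in> W \<Longrightarrow> w \<noteq> v \<Longrightarrow> F w v"
  using univF symF by blast

lemma finW: "finite W" using finV by simp

lemma conn_remove_x:
  assumes conn: "connected_on F T" and ne: "T - {x} \<noteq> {}"
  shows "connected_on E (T - {x})"
proof -
  have "\<forall>a\<in>T - {x}. \<forall>b\<in>T - {x}. (induced E (T - {x}))\<^sup>*\<^sup>* a b"
  proof (intro ballI)
    fix a b assume a: "a \<in> T - {x}" and b: "b \<in> T - {x}"
    have "(induced F T)\<^sup>*\<^sup>* a b" using conn a b by (simp add: connected_on_def)
    then have "(b \<noteq> x \<longrightarrow> (induced E (T - {x}))\<^sup>*\<^sup>* a b) \<and> (b = x \<longrightarrow> v \<in> T - {x} \<and> (induced E (T - {x}))\<^sup>*\<^sup>* a v)"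
    proof (induction rule: rtranclp_induct)
      case base then show ?case using a by simp
    next
      case (step t t')
      have tt: "F t t'" "t \<in> T" "t' \<in> T" using step(2) by (simp_all add: induced_def)
      show ?case
      proof (cases "t' = x")
        case True
        then have "t = v" using tt(1) F_x2 by simp
        then have tx: "t \<noteq> x" using xv by simp
        then show ?thesis using step(3) True \<open>t = v\<close> tt(2) by simp
      next
        case False
        show ?thesis
        proof (cases "t = x")
          case True
          then have "t' = v" using tt(1) F_x1 by simp
          then show ?thesis using step(3) True False by simp
        next
          case tx: False
          then have "E t t'" using tt(1) F_nx False by simp
          then have "induced E (T - {x}) t t'" using tt tx False by (simp add: induced_def)
          then show ?thesis using step(3) tx False by (simp add: rtranclp.rtrancl_into_rtrancl)
        qed
      qed
    qed
    then show "(induced E (T - {x}))\<^sup>*\<^sup>* a b" using b by simp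
  qed
  then show ?thesis using ne by (simp add: connected_on_def)
qed

lemma phi_subtree:
  assumes z: "z \<noteq> x"
  shows "subtree (phi p) z = subtree p z - {x}"
proof
  show "subtree (phi p) z \<subseteq> subtree p z - {x}"
  proof
    fix a assume "a \<in> subtree (phi p) z"
    then have "(par (phi p))\<^sup>*\<^sup>* a z" by (simp add: subtree_def)
    then show "a \<in> subtree p z - {x}"
    proof (induction rule: converse_rtranclp_induct)
      case base then show ?case using z subtree_self by fastforce
    next
      case (step a b)
      have ax: "a \<noteq> x" using step(1) by (simp add: phi_def split: if_splits)
      show ?case
      proof (cases "p a = Some x")
        case True
        then have "p x = Some b" using step(1) ax by (simp add: phi_def)
        then have "x \<in> subtree p z" using step(3) spt[of p x b] by blast
        then have "a \<in> subtree p z" using True spt[of p a x] by blast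
        then show ?thesis using ax by simp
      next
        case False
        then have "p a = Some b" using step(1) ax by (simp add: phi_def)
        then have "a \<in> subtree p z" using step(3) spt[of p a b] by blast
        then show ?thesis using ax by simp
      qed
    qed
  qed
  show "subtree p z - {x} \<subseteq> subtree (phi p) z"
  proof
    fix a assume a: "a \<in> subtree p z - {x}"
    then have "(par p)\<^sup>*\<^sup>* a z" by (simp add: subtree_def)
    then have "a \<in> subtree (phi p) z \<or> (a = x \<and> (\<forall>a'. p a' = Some x \<longrightarrow> a' \<in> subtree (phi p) z))"
    proof (induction rule: converse_rtranclp_induct)
      case base then show ?case by (simp add: subtree_self)
    next
      case (step a b)
      show ?case
      proof (cases "b = x")
        case False
        then have bz: "b \<in> subtree (phi p) z" using step(3) by blast
        show ?thesis
        proof (cases "a = x")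
          case True
          have "\<forall>a'. p a' = Some x \<longrightarrow> a' \<in> subtree (phi p) z"
          proof (intro allI impI)
            fix a' assume pa': "p a' = Some x"
            have a'x: "a' \<noteq> x"
            proof
              assume "a' = x" then have "p x = Some x" using pa' by simp
              then have "b = x" using step(1) True by simp
              then show False using False by simp
            qed
            have "phi p a' = Some b" using pa' a'x step(1) True by (simp add: phi_def)
            then show "a' \<in> subtree (phi p) z" using bz spt[of "phi p" a' b] by blast
          qed
          then show ?thesis using True by simp
        next
          case ax: False
          then have "phi p a = Some b" using step(1) False by (simp add: phi_def)
          then show ?thesis using bz spt[of "phi p" a b] by blast
        qed
      next
        case True
        have xz: "x \<notin> subtree (phi p) z"
        proof
          assume "x \<in> subtree (phi p) z"
          moreover have "phi p x = None" by (simp add: phi_def)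
          ultimately have "x = z" using subtree_none by metis
          then show False using z by simp
        qed
        then have "\<forall>a'. p a' = Some x \<longrightarrow> a' \<in> subtree (phi p) z" using step(3) True by blast
        then show ?thesis using step(1) True by simp
      qed
    qed
    then show "a \<in> subtree (phi p) z" using a by blast
  qed
qed


lemma conn_step:
  assumes "connected_on G T" "a \<in> T" "b \<in> T" "a \<noteq> b"
  shows "\<exists>t\<in>T. G a t"
proof -
  have "(induced G T)\<^sup>*\<^sup>* a b" using assms(1-3) by (simp add: connected_on_def)
  then show ?thesis
  proof (cases rule: converse_rtranclpE)
    case base then show ?thesis using assms(4) by simp
  next
    case (step t) then show ?thesis by (auto simp: induced_def)
  qed
qed

lemma px1:
  assumes st: "search_tree F W r p" and y: "y \<in> W" "y \<noteq> v" "v \<in> subtree p y"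
  shows "\<exists>c. p c = Some y \<and> v \<in> subtree p c \<and> (\<forall>z. p z = Some y \<longrightarrow> z = c)"
proof -
  have acyc: "\<forall>a. \<not> (par p)\<^sup>+\<^sup>+ a a" using st_acyc[OF symF st] .
  obtain c where c: "p c = Some y" "v \<in> subtree p c" using subtree_unfold[of v p y] y(2,3) by blast
  have Cc: "subtree p c \<in> components F (subtree p y - {y})" by (rule st_children[OF symF st c(1)])
  have "\<forall>z. p z = Some y \<longrightarrow> z = c"
  proof (intro allI impI)
    fix z assume z: "p z = Some y"
    have Cz: "subtree p z \<in> components F (subtree p y - {y})" by (rule st_children[OF symF st z])
    have vz: "v \<in> subtree p z"
    proof (cases "z = v")
      case True then show ?thesis using subtree_self by metis
    next
      case False
      have zW: "z \<in> W" using st_parent[OF st z] by blast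
      have Fzv: "F z v" using univF'[OF zW False] .
      have vS: "v \<in> subtree p y - {y}" using y by blast
      show ?thesis using components_edge[OF symF Cz subtree_self vS Fzv] .
    qed
    have "subtree p z = subtree p c" using components_same[OF symF Cz Cc vz c(2)] .
    then have "z \<in> subtree p c" "c \<in> subtree p z" using subtree_self by metis+
    then show "z = c" using acyc_antisym[OF acyc] by (simp add: subtree_def)
  qed
  then show ?thesis using c by blast
qed

lemma px2:
  assumes st: "search_tree F W r p" and nv: "v \<notin> subtree p x"
  shows "p x = Some v \<and> (\<forall>z. p z \<noteq> Some x)"
proof -
  have acyc: "\<forall>a. \<not> (par p)\<^sup>+\<^sup>+ a a" using st_acyc[OF symF st] .
  have xW: "x \<in> W" by simp
  have connx: "connected_on F (subtree p x)" using st_connected[OF symF st xW] .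
  have single: "\<And>a. a \<in> subtree p x \<Longrightarrow> a = x"
  proof (rule ccontr)
    fix a assume a: "a \<in> subtree p x" and ax: "a \<noteq> x"
    obtain t where t: "t \<in> subtree p x" "F x t" using conn_step[OF connx subtree_self a] ax by metis
    then have "t = v" using F_x1 by simp
    then show False using t nv by simp
  qed
  have nochild: "\<forall>z. p z \<noteq> Some x"
  proof (intro allI notI)
    fix z assume z: "p z = Some x"
    then have "z = x" using single subtree_parent by metis
    then show False using z acyc_noself[OF acyc] by metis
  qed
  have xr: "x \<noteq> r"
  proof
    assume "x = r"
    then have "v \<in> subtree p x" using st_subtree_root[OF st] vV by simp
    then show False using nv by simp
  qed
  obtain z where pz: "p x = Some z" using st_hasparent[OF st xW xr] by blast
  have zW: "z \<in> W" using st_parent[OF st pz] by blast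
  have "z = v"
  proof (rule ccontr)
    assume zv: "z \<noteq> v"
    have connz: "connected_on F (subtree p z)" using st_connected[OF symF st zW] .
    have xz: "x \<in> subtree p z" using pz by (rule subtree_parent)
    have xnz: "x \<noteq> z" using pz acyc_noself[OF acyc] by metis
    obtain t where t: "t \<in> subtree p z" "F x t" using conn_step[OF connz xz subtree_self xnz] by metis
    then have tv: "t = v" using F_x1 by simp
    have vS: "v \<in> subtree p z - {z}" using t tv zv by blast
    have Cx: "subtree p x \<in> components F (subtree p z - {z})" by (rule st_children[OF symF st pz])
    have "F x v" using F_x1 by simp
    from components_edge[OF symF Cx subtree_self vS this] show False using nv by simp
  qed
  then show ?thesis using pz nochild by simp
qed

lemma x_child:
  assumes st: "search_tree F W r p" and c: "p c = Some x"
  shows "v \<in> subtree p x \<and> v \<in> subtree p c \<and> (\<forall>z. p z = Some x \<longrightarrow> z = c)"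
proof -
  have vx: "v \<in> subtree p x" using px2[OF st] c by blast
  have xW: "x \<in> W" by simp
  obtain c' where c': "p c' = Some x" "v \<in> subtree p c'" "\<forall>z. p z = Some x \<longrightarrow> z = c'"
    using px1[OF st xW xv vx] by (elim exE conjE) blast
  have "c = c'" using c'(3) c by blast
  then show ?thesis using vx c' by blast
qed

lemma phi_st_aux:
  assumes st: "search_tree F W r p" and r': "r' \<in> V" "phi p r' = None" "\<forall>a\<in>V. a \<in> subtree p r'"
  shows "search_tree E V r' (phi p)"
proof -
  have acyc: "\<forall>a. \<not> (par p)\<^sup>+\<^sup>+ a a" using st_acyc[OF symF st] .
  have r'x: "r' \<noteq> x" using r'(1) xV by blast
  have out: "\<forall>y. y \<notin> V \<longrightarrow> phi p y = None"
  proof (intro allI impI)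
    fix y assume y: "y \<notin> V"
    show "phi p y = None"
    proof (cases "y = x")
      case True then show ?thesis by (simp add: phi_def)
    next
      case False
      then have "p y = None" using st_basic[OF st] y by blast
      then show ?thesis using False by (simp add: phi_def)
    qed
  qed
  have reach: "\<forall>a\<in>V. (par (phi p))\<^sup>*\<^sup>* a r'"
  proof
    fix a assume a: "a \<in> V"
    then have "a \<in> subtree p r' - {x}" using r'(3) xV by blast
    then have "a \<in> subtree (phi p) r'" using phi_subtree[OF r'x] by simp
    then show "(par (phi p))\<^sup>*\<^sup>* a r'" by (simp only: subtree_iff)
  qed
  have acycphi: "\<forall>a. \<not> (par (phi p))\<^sup>+\<^sup>+ a a"
  proof (intro allI notI)
    fix a assume "(par (phi p))\<^sup>+\<^sup>+ a a"
    from tranclpD[OF this] obtain b where ab: "phi p a = Some b" "(par (phi p))\<^sup>*\<^sup>* b a"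
      by blast
    have ax: "a \<noteq> x" using ab(1) by (simp add: phi_def split: if_splits)
    have "b \<in> subtree (phi p) a" using ab(2) by (simp only: subtree_iff)
    then have ba: "b \<in> subtree p a" using phi_subtree[OF ax] by simp
    have ab': "a \<in> subtree p b"
    proof (cases "p a = Some x")
      case True
      then have "p x = Some b" using ab(1) ax by (simp add: phi_def)
      then have "x \<in> subtree p b" by (rule subtree_parent)
      then show ?thesis using True spt[of p a x] by blast
    next
      case False
      then have "p a = Some b" using ab(1) ax by (simp add: phi_def)
      then show ?thesis by (rule subtree_parent)
    qed
    have "a = b" using acyc_antisym[OF acyc] ba ab' by (simp add: subtree_def)
    then have "phi p a = Some a" using ab(1) by simp
    then show False
    proof (cases "p a = Some x")
      case True
      then have "p x = Some a" using \<open>phi p a = Some a\<close> ax by (simp add: phi_def)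
      then have "(par p)\<^sup>+\<^sup>+ a a" using True by (meson tranclp.r_into_trancl tranclp.trancl_into_trancl)
      then show False using acyc by blast
    next
      case False
      then have "p a = Some a" using \<open>phi p a = Some a\<close> ax by (simp add: phi_def)
      then show False using acyc_noself[OF acyc] by metis
    qed
  qed
  have conn: "\<forall>y\<in>V. connected_on E (subtree (phi p) y)"
  proof
    fix y assume y: "y \<in> V"
    then have yx: "y \<noteq> x" using xV by blast
    have "connected_on F (subtree p y)" using st_connected[OF symF st] y by simp
    moreover have "subtree p y - {x} \<noteq> {}" using yx subtree_self by fastforce
    ultimately have "connected_on E (subtree p y - {x})" by (rule conn_remove_x)
    then show "connected_on E (subtree (phi p) y)" using phi_subtree[OF yx] by simp
  qed
  have cmp: "\<forall>a\<in>V. \<forall>b\<in>V. E a b \<longrightarrow> a \<in> subtree (phi p) b \<or> b \<in> subtree (phi p) a"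
  proof (intro ballI impI)
    fix a b assume a: "a \<in> V" and b: "b \<in> V" and ab: "E a b"
    have ax: "a \<noteq> x" and bx: "b \<noteq> x" using a b xV by blast+
    have "F a b" using F_nx[OF ax bx] ab by simp
    then have "a \<in> subtree p b \<or> b \<in> subtree p a" using st_comparable[OF symF st] a b by simp
    then show "a \<in> subtree (phi p) b \<or> b \<in> subtree (phi p) a"
      using phi_subtree[OF ax] phi_subtree[OF bx] ax bx by simp
  qed
  show ?thesis by (rule ch_search_tree[OF symE finV r'(1,2) out reach acycphi conn cmp])
qed

lemma phi_st:
  assumes st: "search_tree F W r p"
  shows "\<exists>r'. search_tree E V r' (phi p)"
proof (cases "r = x")
  case False
  have rV: "r \<in> V" using st_basic[OF st] False by simp
  have "phi p r = None" using st_basic[OF st] False by (simp add: phi_def)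
  moreover have "\<forall>a\<in>V. a \<in> subtree p r" using st_subtree_root[OF st] by simp
  ultimately show ?thesis using phi_st_aux[OF st rV] by blast
next
  case True
  have "v \<in> subtree p r" using st_subtree_root[OF st] vV by simp
  then obtain c where c: "p c = Some x" "v \<in> subtree p c"
    using subtree_unfold[of v p r] True xv by metis
  have cu: "\<forall>z. p z = Some x \<longrightarrow> z = c" using x_child[OF st c(1)] by blast
  have cW: "c \<in> W" using st_parent[OF st c(1)] by blast
  have cx: "c \<noteq> x" using c(1) acyc_noself[OF st_acyc[OF symF st]] by metis
  have cV: "c \<in> V" using cW cx by simp
  have px: "p x = None" using st_basic[OF st] True by simp
  have "phi p c = None" using c(1) cx px by (simp add: phi_def)
  moreover have "\<forall>a\<in>V. a \<in> subtree p c"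
  proof
    fix a assume a: "a \<in> V"
    then have ax: "a \<noteq> x" using xV by blast
    have "a \<in> subtree p r" using st_subtree_root[OF st] a by simp
    then obtain z where "p z = Some x" "a \<in> subtree p z" using subtree_unfold[of a p r] True ax by metis
    then show "a \<in> subtree p c" using cu by blast
  qed
  ultimately show ?thesis using phi_st_aux[OF st cV] by blast
qed

end

context pend
begin

definition lab :: "('a \<Rightarrow> 'a option) \<Rightarrow> nat" where
  "lab p = (if subtree p x = {x} then 0 else Suc (card (subtree p x) mod 2))"

lemma lab_lt: "lab p < 3" by (simp add: lab_def)

lemma st_fin_subtree: "search_tree F W r p \<Longrightarrow> y \<in> W \<Longrightarrow> finite (subtree p y)"
  using st_subtree_sub finW finite_subset by metis

lemma k1:
  assumes st: "search_tree F W r p" and pw: "p x = Some u" and nv: "v \<notin> subtree p x"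
  shows "phi (rotate F p u x) = phi p \<and> lab (rotate F p u x) \<noteq> lab p"
proof -
  have acyc: "\<forall>a. \<not> (par p)\<^sup>+\<^sup>+ a a" using st_acyc[OF symF st] .
  have h: "p x = Some v" "\<forall>z. p z \<noteq> Some x" using px2[OF st nv] by blast+
  have u: "u = v" using h(1) pw by simp
  have vx: "v \<noteq> x" using xv by simp
  have pxv: "p x = Some v" using h(1) .
  define q where "q = rotate F p v x"
  have qv: "q v = Some x" unfolding q_def by (rule rot_u[where p=p, OF pxv vx])
  have qx: "q x = p v" unfolding q_def by (rule rot_w[where p=p, OF pxv vx])
  have qo: "\<And>z. z \<noteq> v \<Longrightarrow> z \<noteq> x \<Longrightarrow> q z = p z"
    unfolding q_def using rot_o[where p=p, OF pxv vx] h(2) by simp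
  have "phi q = phi p"
  proof
    fix y
    show "phi q y = phi p y"
    proof (cases "y = x")
      case True then show ?thesis by (simp add: phi_def)
    next
      case yx: False
      show ?thesis
      proof (cases "y = v")
        case True then show ?thesis using yx qv qx h(2) by (simp add: phi_def)
      next
        case False then show ?thesis using yx qo[OF False yx] h(2) by (simp add: phi_def)
      qed
    qed
  qed
  moreover have "lab q \<noteq> lab p"
  proof -
    have "subtree p x = {x}" using subtree_leaf h(2) by metis
    then have lp: "lab p = 0" by (simp add: lab_def)
    have "subtree q x = subtree p v" unfolding q_def by (rule rot_subtree_w[where p=p, OF pxv vx acyc])
    then have "v \<in> subtree q x" using subtree_self by metis
    then have "subtree q x \<noteq> {x}" using vx by auto
    then have "lab q \<noteq> 0" by (simp add: lab_def)
    then show ?thesis using lp by simp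
  qed
  ultimately show ?thesis using u q_def by simp
qed

lemma k2:
  assumes st: "search_tree F W r p" and pw: "p x = Some u" and vx': "v \<in> subtree p x"
  shows "phi (rotate F p u x) = phi p \<and> lab (rotate F p u x) \<noteq> lab p"
proof -
  have acyc: "\<forall>a. \<not> (par p)\<^sup>+\<^sup>+ a a" using st_acyc[OF symF st] .
  have xW: "x \<in> W" by simp
  obtain c where c: "p c = Some x" "v \<in> subtree p c" "\<forall>z. p z = Some x \<longrightarrow> z = c"
    using px1[OF st xW xv vx'] by (elim exE conjE) blast
  have ux: "u \<noteq> x" using pw acyc_noself[OF acyc] by metis
  have xu: "x \<in> subtree p u" using pw by (rule subtree_parent)
  have uv: "u \<noteq> v"
  proof
    assume "u = v"
    then have "x = v" using acyc_antisym[OF acyc] xu vx' by (simp add: subtree_def)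
    then show False using xv by simp
  qed
  have uW: "u \<in> W" using st_parent[OF st pw] by blast
  have vu: "v \<in> subtree p u" by (rule subtree_trans[OF vx' xu])
  obtain cu where cu: "p cu = Some u" "v \<in> subtree p cu" "\<forall>z. p z = Some u \<longrightarrow> z = cu"
    using px1[OF st uW uv vu] by (elim exE conjE) blast
  have uniq_u: "\<forall>z. p z = Some u \<longrightarrow> z = x" using cu(3) pw by metis
  have sub_u: "subtree p u = insert u (subtree p x)" by (rule subtree_one_child[OF pw uniq_u])
  have cyc1: "p u \<noteq> Some x"
  proof
    assume pu: "p u = Some x"
    have "(par p)\<^sup>+\<^sup>+ x x" using pw pu by (meson tranclp.r_into_trancl tranclp.trancl_into_trancl)
    then show False using acyc by blast
  qed
  have cu': "c \<noteq> u" using c(1) cyc1 by metis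
  have cx: "c \<noteq> x" using c(1) acyc_noself[OF acyc] by metis
  define q where "q = rotate F p u x"
  have ux': "u \<noteq> x" by (rule ux)
  have qx: "q x = p u" unfolding q_def by (rule rot_w[where p=p, OF pw ux'])
  have qu: "q u = Some x" unfolding q_def by (rule rot_u[where p=p, OF pw ux'])
  have Fuv: "F u v" using univF'[OF uW uv] .
  have qc: "q c = Some u"
    unfolding q_def using rot_o[where p=p, OF pw ux' cu' cx] c(1,2) Fuv by auto
  have qo: "\<And>z. z \<noteq> u \<Longrightarrow> z \<noteq> x \<Longrightarrow> z \<noteq> c \<Longrightarrow> q z = p z"
  proof -
    fix z assume z: "z \<noteq> u" "z \<noteq> x" "z \<noteq> c"
    then have "p z \<noteq> Some x" using c(3) by blast
    then show "q z = p z" unfolding q_def using rot_o[where p=p, OF pw ux' z(1,2)] by simp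
  qed
  have "phi q = phi p"
  proof
    fix y
    show "phi q y = phi p y"
    proof (cases "y = x")
      case True then show ?thesis by (simp add: phi_def)
    next
      case yx: False
      show ?thesis
      proof (cases "y = u")
        case True then show ?thesis using yx qu qx cyc1 by (simp add: phi_def)
      next
        case yu: False
        show ?thesis
        proof (cases "y = c")
          case True then show ?thesis using yx qc c(1) pw ux by (simp add: phi_def)
        next
          case False
          then have "p y \<noteq> Some x" using c(3) by blast
          then show ?thesis using yx qo[OF yu yx False] by (simp add: phi_def)
        qed
      qed
    qed
  qed
  moreover have "lab q \<noteq> lab p"
  proof -
    have fin: "finite (subtree p x)" using st_fin_subtree[OF st xW] .
    have un: "u \<notin> subtree p x"
    proof
      assume "u \<in> subtree p x"
      then have "u = x" using acyc_antisym[OF acyc] xu by (simp add: subtree_def)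
      then show False using ux by simp
    qed
    have sq: "subtree q x = insert u (subtree p x)"
      unfolding q_def using rot_subtree_w[where p=p, OF pw ux' acyc] sub_u by simp
    have cq: "card (subtree q x) = Suc (card (subtree p x))" using sq fin un by simp
    have n1: "subtree p x \<noteq> {x}" using vx' xv by auto
    have n2: "subtree q x \<noteq> {x}" using sq ux by auto
    have "card (subtree p x) mod 2 \<noteq> Suc (card (subtree p x)) mod 2" by presburger
    then show ?thesis using n1 n2 cq by (simp add: lab_def)
  qed
  ultimately show ?thesis using q_def by simp
qed

lemma k3:
  assumes st: "search_tree F W r p" and pw: "p v = Some x"
  shows "phi (rotate F p x v) = phi p \<and> lab (rotate F p x v) \<noteq> lab p"
proof -
  have acyc: "\<forall>a. \<not> (par p)\<^sup>+\<^sup>+ a a" using st_acyc[OF symF st] .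
  have ch: "\<forall>z. p z = Some x \<longrightarrow> z = v" using x_child[OF st pw] by blast
  have xv': "x \<noteq> v" by (rule xv)
  have pxx: "p x \<noteq> Some x" using acyc_noself[OF acyc] by metis
  define q where "q = rotate F p x v"
  have qv: "q v = p x" unfolding q_def by (rule rot_w[where p=p, OF pw xv'])
  have qx: "q x = Some v" unfolding q_def by (rule rot_u[where p=p, OF pw xv'])
  have qo: "\<And>z. z \<noteq> x \<Longrightarrow> z \<noteq> v \<Longrightarrow> q z = p z"
  proof -
    fix z assume z: "z \<noteq> x" "z \<noteq> v"
    have "\<not> (p z = Some v \<and> (\<exists>t\<in>subtree p z. F x t))"
    proof
      assume "p z = Some v \<and> (\<exists>t\<in>subtree p z. F x t)"
      then have pz: "p z = Some v" and "\<exists>t\<in>subtree p z. F x t" by blast+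
      then obtain t where "t \<in> subtree p z" "F x t" by blast
      then have vz: "v \<in> subtree p z" using F_x1 by simp
      have "z \<in> subtree p v" using pz by (rule subtree_parent)
      then have "z = v" using acyc_antisym[OF acyc] vz by (simp add: subtree_def)
      then show False using z by simp
    qed
    then show "q z = p z" unfolding q_def rot_o[where p=p, OF pw xv' z] by (rule if_not_P)
  qed
  have "phi q = phi p"
  proof
    fix y
    show "phi q y = phi p y"
    proof (cases "y = x")
      case True then show ?thesis by (simp add: phi_def)
    next
      case yx: False
      show ?thesis
      proof (cases "y = v")
        case True then show ?thesis using yx qv pw pxx by (simp add: phi_def)
      next
        case False
        then have "p y \<noteq> Some x" using ch by blast
        then show ?thesis using yx qo[OF yx False] by (simp add: phi_def)
      qed
    qed
  qed
  moreover have "lab q \<noteq> lab p"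
  proof -
    have "\<forall>z. q z \<noteq> Some x"
    proof
      fix z
      show "q z \<noteq> Some x"
      proof (cases "z = x")
        case True then show ?thesis using qx xv by simp
      next
        case zx: False
        show ?thesis
        proof (cases "z = v")
          case True then show ?thesis using qv pxx by simp
        next
          case False then show ?thesis using qo[OF zx False] ch by auto
        qed
      qed
    qed
    then have "subtree q x = {x}" by (rule subtree_leaf)
    then have l0: "lab q = 0" by (simp add: lab_def)
    have "v \<in> subtree p x" using pw by (rule subtree_parent)
    then have "subtree p x \<noteq> {x}" using xv by auto
    then have "lab p \<noteq> 0" by (simp add: lab_def)
    then show ?thesis using l0 by simp
  qed
  ultimately show ?thesis using q_def by simp
qed

lemma k4:
  assumes st: "search_tree F W r p" and pw: "p c = Some x" and cv: "c \<noteq> v"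
  shows "phi (rotate F p x c) = phi p \<and> lab (rotate F p x c) \<noteq> lab p"
proof -
  have acyc: "\<forall>a. \<not> (par p)\<^sup>+\<^sup>+ a a" using st_acyc[OF symF st] .
  have xc: "v \<in> subtree p x" "v \<in> subtree p c" "\<forall>z. p z = Some x \<longrightarrow> z = c" using x_child[OF st pw] by blast+
  have cW: "c \<in> W" using st_parent[OF st pw] by blast
  obtain d where d: "p d = Some c" "v \<in> subtree p d" "\<forall>z. p z = Some c \<longrightarrow> z = d"
    using px1[OF st cW cv xc(2)] by (elim exE conjE) blast
  have cx: "x \<noteq> c" using pw acyc_noself[OF acyc] by metis
  have dc: "d \<noteq> c" using d(1) acyc_noself[OF acyc] by metis
  have dx: "d \<noteq> x"
  proof
    assume "d = x"
    then have "(par p)\<^sup>+\<^sup>+ c c" using pw d(1) by (meson tranclp.r_into_trancl tranclp.trancl_into_trancl)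
    then show False using acyc by blast
  qed
  have pxx: "p x \<noteq> Some x" using acyc_noself[OF acyc] by metis
  define q where "q = rotate F p x c"
  have qc: "q c = p x" unfolding q_def by (rule rot_w[where p=p, OF pw cx])
  have qx: "q x = Some c" unfolding q_def by (rule rot_u[where p=p, OF pw cx])
  have qd: "q d = Some x"
    unfolding q_def using rot_o[where p=p, OF pw cx dx dc] d(1,2) F_x1 by auto
  have qo: "\<And>z. z \<noteq> x \<Longrightarrow> z \<noteq> c \<Longrightarrow> z \<noteq> d \<Longrightarrow> q z = p z"
  proof -
    fix z assume z: "z \<noteq> x" "z \<noteq> c" "z \<noteq> d"
    have "p z \<noteq> Some c" using d(3) z(3) by blast
    then show "q z = p z" unfolding q_def using rot_o[where p=p, OF pw cx z(1,2)] by simp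
  qed
  have "phi q = phi p"
  proof
    fix y
    show "phi q y = phi p y"
    proof (cases "y = x")
      case True then show ?thesis by (simp add: phi_def)
    next
      case yx: False
      show ?thesis
      proof (cases "y = c")
        case True then show ?thesis using yx qc pw pxx by (simp add: phi_def)
      next
        case yc: False
        show ?thesis
        proof (cases "y = d")
          case True then show ?thesis using yx qd qx d(1) cx by (simp add: phi_def)
        next
          case False
          then have "p y \<noteq> Some x" using xc(3) yc by blast
          then show ?thesis using yx qo[OF yx yc False] by (simp add: phi_def)
        qed
      qed
    qed
  qed
  moreover have "lab q \<noteq> lab p"
  proof -
    have dW: "d \<in> W" using st_parent[OF st d(1)] by blast
    have fin: "finite (subtree p d)" using st_fin_subtree[OF st dW] .
    have quniq: "\<forall>z. q z = Some x \<longrightarrow> z = d"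
    proof (intro allI impI)
      fix z assume qz: "q z = Some x"
      show "z = d"
      proof (rule ccontr)
        assume zd: "z \<noteq> d"
        show False
        proof (cases "z = x")
          case True then show False using qz qx cx by simp
        next
          case zx: False
          show False
          proof (cases "z = c")
            case True then show False using qz qc pxx by simp
          next
            case False then show False using qz qo[OF zx False zd] xc(3) by simp
          qed
        qed
      qed
    qed
    have sq: "subtree q x = insert x (subtree q d)" by (rule subtree_one_child[OF qd quniq])
    have sqd: "subtree q d = subtree p d" unfolding q_def by (rule rot_subtree_other[where p=p, OF pw cx dx dc])
    have sp1: "subtree p x = insert x (subtree p c)" by (rule subtree_one_child[OF pw xc(3)])
    have sp2: "subtree p c = insert c (subtree p d)" by (rule subtree_one_child[OF d(1) d(3)])
    have dcx: "d \<in> subtree p c" using d(1) by (rule subtree_parent)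
    have cxx: "c \<in> subtree p x" using pw by (rule subtree_parent)
    have xn: "x \<notin> subtree p d"
    proof
      assume "x \<in> subtree p d"
      moreover have "d \<in> subtree p x" by (rule subtree_trans[OF dcx cxx])
      ultimately have "x = d" using acyc_antisym[OF acyc] by (simp add: subtree_def)
      then show False using dx by simp
    qed
    have cn: "c \<notin> subtree p d"
    proof
      assume "c \<in> subtree p d"
      then have "c = d" using acyc_antisym[OF acyc] dcx by (simp add: subtree_def)
      then show False using dc by simp
    qed
    have c1: "card (subtree q x) = Suc (card (subtree p d))" using sq sqd fin xn by simp
    have c2: "card (subtree p x) = Suc (Suc (card (subtree p d)))" using sp1 sp2 fin xn cn cx by simp
    have n1: "subtree p x \<noteq> {x}" using xc(1) xv by auto
    have n2: "subtree q x \<noteq> {x}" using sq sqd d(2) xv by auto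
    have md: "\<And>n::nat. Suc n mod 2 \<noteq> Suc (Suc n) mod 2" by presburger
    have "Suc (card (subtree p d)) mod 2 \<noteq> Suc (Suc (card (subtree p d))) mod 2" by (rule md)
    then show ?thesis using n1 n2 c1 c2 by (simp add: lab_def)
  qed
  ultimately show ?thesis using q_def by simp
qed

lemma kx:
  assumes st: "search_tree F W r p" and pw: "p w = Some u" and ux: "u = x \<or> w = x"
  shows "phi (rotate F p u w) = phi p \<and> lab (rotate F p u w) \<noteq> lab p"
proof (cases "w = x")
  case True
  then have pxu: "p x = Some u" using pw by simp
  show ?thesis
  proof (cases "v \<in> subtree p x")
    case True then show ?thesis using k2[OF st pxu] \<open>w = x\<close> by simp
  next
    case False then show ?thesis using k1[OF st pxu] \<open>w = x\<close> by simp
  qed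
next
  case False
  then have u: "u = x" using ux by simp
  then have pw': "p w = Some x" using pw by simp
  show ?thesis
  proof (cases "w = v")
    case True then show ?thesis using k3[OF st] pw' u by simp
  next
    case False then show ?thesis using k4[OF st pw' False] u by simp
  qed
qed


lemma k5:
  assumes st: "search_tree F W r p" and pw: "p w = Some u" and ux: "u \<noteq> x" and wx: "w \<noteq> x"
  shows "phi (rotate F p u w) = rotate E (phi p) u w \<and> phi p w = Some u \<and> lab (rotate F p u w) = lab p"
proof -
  have acyc: "\<forall>a. \<not> (par p)\<^sup>+\<^sup>+ a a" using st_acyc[OF symF st] .
  have uw: "u \<noteq> w" using pw acyc_noself[OF acyc] by metis
  define q where "q = rotate F p u w"
  have xu: "x \<noteq> u" and xw: "x \<noteq> w" using ux wx by auto
  have labeq: "lab q = lab p"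
    unfolding q_def lab_def using rot_subtree_other[where p=p, OF pw uw xu xw] by simp
  have pwu': "phi p w = Some u" using pw wx ux by (simp add: phi_def)
  have qw: "q w = p u" unfolding q_def by (rule rot_w[where p=p, OF pw uw])
  have qu: "q u = Some w" unfolding q_def by (rule rot_u[where p=p, OF pw uw])
  have qo: "\<And>z. z \<noteq> u \<Longrightarrow> z \<noteq> w \<Longrightarrow> q z = (if p z = Some w \<and> (\<exists>t\<in>subtree p z. F u t) then Some u else p z)"
    unfolding q_def by (rule rot_o[where p=p, OF pw uw])
  have Rw: "rotate E (phi p) u w w = phi p u" by (rule rot_w[where p="phi p", OF pwu' uw])
  have Ru: "rotate E (phi p) u w u = Some w" by (rule rot_u[where p="phi p", OF pwu' uw])
  have Ro: "\<And>z. z \<noteq> u \<Longrightarrow> z \<noteq> w \<Longrightarrow> rotate E (phi p) u w z =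
      (if phi p z = Some w \<and> (\<exists>t\<in>subtree (phi p) z. E u t) then Some u else phi p z)"
    by (rule rot_o[where p="phi p", OF pwu' uw])
  have key: "\<And>S. (u = v \<longrightarrow> x \<notin> S) \<Longrightarrow> (\<exists>t\<in>S. F u t) = (\<exists>t\<in>S - {x}. E u t)"
  proof -
    fix S assume h: "u = v \<longrightarrow> x \<notin> S"
    show "(\<exists>t\<in>S. F u t) = (\<exists>t\<in>S - {x}. E u t)"
    proof
      assume "\<exists>t\<in>S. F u t"
      then obtain t where t: "t \<in> S" "F u t" by blast
      have tx: "t \<noteq> x"
      proof
        assume "t = x" then have "u = v" using t(2) F_x2 by simp
        then show False using h t(1) \<open>t = x\<close> by simp
      qed
      then have "E u t" using t(2) F_nx[OF ux tx] by simp
      then show "\<exists>t\<in>S - {x}. E u t" using t(1) tx by blast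
    next
      assume "\<exists>t\<in>S - {x}. E u t"
      then obtain t where t: "t \<in> S" "t \<noteq> x" "E u t" by blast
      then have "F u t" using F_nx[OF ux t(2)] by simp
      then show "\<exists>t\<in>S. F u t" using t(1) by blast
    qed
  qed
  have "phi q = rotate E (phi p) u w"
  proof
    fix y
    show "phi q y = rotate E (phi p) u w y"
    proof (cases "y = x")
      case True
      have "phi p x = None" by (simp add: phi_def)
      then show ?thesis using True Ro[OF xu xw] by (simp add: phi_def)
    next
      case yx: False
      show ?thesis
      proof (cases "y = w")
        case True
        show ?thesis
        proof (cases "p u = Some x")
          case pu: True
          have "p x \<noteq> Some w"
          proof
            assume "p x = Some w"
            then have "(par p)\<^sup>+\<^sup>+ w w" using pw pu
              by (meson tranclp.r_into_trancl tranclp.trancl_into_trancl)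
            then show False using acyc by blast
          qed
          then have "q x = p x" using qo[OF xu xw] by simp
          then show ?thesis using True pu qw Rw wx ux by (simp add: phi_def)
        next
          case False
          then show ?thesis using True qw Rw wx ux by (simp add: phi_def)
        qed
      next
        case yw: False
        show ?thesis
        proof (cases "y = u")
          case True
          then show ?thesis using qu Ru wx yx by (simp add: phi_def)
        next
          case yu: False
          show ?thesis
          proof (cases "p y = Some x")
            case py: True
            have qy: "q y = Some x" using qo[OF yu yw] py wx by simp
            have lhs: "phi q y = q x" using qy yx by (simp add: phi_def)
            have qx: "q x = (if p x = Some w \<and> (\<exists>t\<in>subtree p x. F u t) then Some u else p x)"
              using qo[OF xu xw] .
            have rhs: "rotate E (phi p) u w y = (if p x = Some w \<and> (\<exists>t\<in>subtree (phi p) y. E u t) then Some u else p x)"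
            proof -
              have h: "phi p y = p x" using py yx by (simp add: phi_def)
              show ?thesis by (rule Ro[OF yu yw, unfolded h])
            qed
            have xch: "v \<in> subtree p x" "\<forall>z. p z = Some x \<longrightarrow> z = y" using x_child[OF st py] by blast+
            have sx: "subtree p x = insert x (subtree p y)" by (rule subtree_one_child[OF py xch(2)])
            have xny: "x \<notin> subtree p y"
            proof
              assume "x \<in> subtree p y"
              moreover have "y \<in> subtree p x" using py by (rule subtree_parent)
              ultimately have "x = y" using acyc_antisym[OF acyc] by (simp add: subtree_def)
              then show False using yx by simp
            qed
            have sphi: "subtree (phi p) y = subtree p y" using phi_subtree[of y p] yx xny by auto
            have cond: "p x = Some w \<Longrightarrow> (\<exists>t\<in>subtree p x. F u t) = (\<exists>t\<in>subtree (phi p) y. E u t)"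
            proof -
              assume pxw: "p x = Some w"
              have uv: "u \<noteq> v"
              proof
                assume "u = v"
                have "x \<in> subtree p w" using pxw by (rule subtree_parent)
                then have "x \<in> subtree p u" by (rule subtree_trans[OF _ subtree_parent[of p w u, OF pw]])
                then have "x = v" using acyc_antisym[OF acyc] xch(1) \<open>u = v\<close> by (simp add: subtree_def)
                then show False using xv by simp
              qed
              have "(\<exists>t\<in>subtree p x. F u t) = (\<exists>t\<in>subtree p x - {x}. E u t)" using key uv by blast
              moreover have "subtree p x - {x} = subtree p y" using sx xny by auto
              ultimately show ?thesis using sphi by simp
            qed
            show ?thesis
            proof (cases "p x = Some w")
              case True
              then have "(\<exists>t\<in>subtree p x. F u t) = (\<exists>t\<in>subtree (phi p) y. E u t)" by (rule cond)
              then show ?thesis using lhs qx rhs True by simp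
            next
              case False then show ?thesis using lhs qx rhs by simp
            qed
          next
            case py: False
            have qy: "q y = (if p y = Some w \<and> (\<exists>t\<in>subtree p y. F u t) then Some u else p y)"
              using qo[OF yu yw] .
            have qyx: "q y \<noteq> Some x" using qy py ux by simp
            have lhs: "phi q y = q y" using qyx yx by (simp add: phi_def)
            have rhs: "rotate E (phi p) u w y = (if p y = Some w \<and> (\<exists>t\<in>subtree p y - {x}. E u t) then Some u else p y)"
            proof -
              have h1: "phi p y = p y" using py yx by (simp add: phi_def)
              have h2: "subtree (phi p) y = subtree p y - {x}" using phi_subtree[of y p] yx by simp
              show ?thesis by (rule Ro[OF yu yw, unfolded h1 h2])
            qed
            have cond: "p y = Some w \<Longrightarrow> (\<exists>t\<in>subtree p y. F u t) = (\<exists>t\<in>subtree p y - {x}. E u t)"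
            proof -
              assume pyw: "p y = Some w"
              have "u = v \<longrightarrow> x \<notin> subtree p y"
              proof (intro impI notI)
                assume uv: "u = v" and xy: "x \<in> subtree p y"
                have vy: "v \<in> subtree p y"
                proof (cases "v \<in> subtree p x")
                  case True then show ?thesis by (rule subtree_trans[OF _ xy])
                next
                  case False
                  then have "p x = Some v" using px2[OF st] by blast
                  moreover have "x \<noteq> y" using yx by simp
                  ultimately show ?thesis using subtree_step[OF xy] by blast
                qed
                have "y \<in> subtree p w" using pyw by (rule subtree_parent)
                then have "y \<in> subtree p u" by (rule subtree_trans[OF _ subtree_parent[of p w u, OF pw]])
                then have "y \<in> subtree p v" using uv by simp
                then have "y = v" using acyc_antisym[OF acyc] vy by (simp add: subtree_def)
                then show False using yu uv by simp
              qed
              then show ?thesis by (rule key)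
            qed
            show ?thesis
            proof (cases "p y = Some w")
              case True
              then have "(\<exists>t\<in>subtree p y. F u t) = (\<exists>t\<in>subtree p y - {x}. E u t)" by (rule cond)
              then show ?thesis using lhs qy rhs True by simp
            next
              case False then show ?thesis using lhs qy rhs by simp
            qed
          qed
        qed
      qed
    qed
  qed
  then show ?thesis using labeq pwu' q_def by simp
qed

end

lemma induced_cong: "\<forall>a\<in>S. \<forall>b\<in>S. E1 a b = E2 a b \<Longrightarrow> T \<subseteq> S \<Longrightarrow> induced E1 T = induced E2 T"
  by (auto simp: induced_def fun_eq_iff)

lemma st_cong_aux:
  shows "search_tree E1 S r p \<Longrightarrow> (\<forall>a\<in>S. \<forall>b\<in>S. E1 a b = E2 a b) \<longrightarrow> search_tree E2 S r p"
proof (induction rule: search_tree.induct)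
  case (1 V r p)
  show ?case
  proof
    assume ag: "\<forall>a\<in>V. \<forall>b\<in>V. E1 a b = E2 a b"
    have i1: "induced E1 V = induced E2 V" using induced_cong[OF ag] by blast
    have i2: "induced E1 (V - {r}) = induced E2 (V - {r})" using induced_cong[OF ag] by blast
    have conn: "connected_on E2 V" using 1(1) i1 by (simp add: connected_on_def)
    have comps: "components E1 (V - {r}) = components E2 (V - {r})" using i2 by (simp add: components_def)
    show "search_tree E2 V r p"
    proof (rule search_tree.intros[OF conn 1(2,3,4)])
      show "\<forall>C\<in>components E2 (V - {r}). \<exists>c\<in>C. p c = Some r \<and> search_tree E2 C c (restr p C c)"
      proof
        fix C assume C: "C \<in> components E2 (V - {r})"
        then have C1: "C \<in> components E1 (V - {r})" using comps by simp
        have CV: "C \<subseteq> V" using components_sub[OF C1] by blast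
        obtain c where c: "c \<in> C" "p c = Some r"
          "(\<forall>a\<in>C. \<forall>b\<in>C. E1 a b = E2 a b) \<longrightarrow> search_tree E2 C c (restr p C c)"
          using bspec[OF 1(5) C1] by (elim bexE conjE) blast
        have "\<forall>a\<in>C. \<forall>b\<in>C. E1 a b = E2 a b"
        proof (intro ballI)
          fix a b assume "a \<in> C" "b \<in> C"
          then have "a \<in> V" "b \<in> V" using CV by blast+
          then show "E1 a b = E2 a b" using ag by simp
        qed
        then show "\<exists>c\<in>C. p c = Some r \<and> search_tree E2 C c (restr p C c)" using c by blast
      qed
    qed
  qed
qed

lemma st_cong: assumes "search_tree E1 S r p" "\<forall>a\<in>S. \<forall>b\<in>S. E1 a b = E2 a b" shows "search_tree E2 S r p"
  by (rule mp[OF st_cong_aux[OF assms(1)] assms(2)])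

definition emb :: "'a set \<Rightarrow> 'a \<Rightarrow> ('a \<Rightarrow> 'a option) \<Rightarrow> ('a \<Rightarrow> 'a option)" where
  "emb S y p = (\<lambda>z. if z \<in> S \<and> p z = None then Some y else p z)"

lemma connected_agree: "connected_on E1 S \<Longrightarrow> \<forall>a\<in>S. \<forall>b\<in>S. E1 a b = E2 a b \<Longrightarrow> connected_on E2 S"
  using induced_cong[of S E1 E2 S] by (simp add: connected_on_def)

lemma emb_st:
  assumes sym2: "\<forall>a b. E2 a b \<longrightarrow> E2 b a" and st: "search_tree E1 S r p"
    and ag: "\<forall>a\<in>S. \<forall>b\<in>S. E1 a b = E2 a b" and yS: "y \<notin> S" and conn: "connected_on E2 (insert y S)"
  shows "search_tree E2 (insert y S) y (emb S y p)"
proof -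
  have b: "r \<in> S" "p r = None" "\<forall>z. z \<notin> S \<longrightarrow> p z = None" "connected_on E1 S" using st_basic[OF st] by blast+
  have connS: "connected_on E2 S" using connected_agree[OF b(4) ag] .
  have cs: "components E2 (insert y S - {y}) = {S}"
    using connected_components[OF sym2 connS] yS by simp
  have rr: "restr (emb S y p) S r = p"
  proof
    fix z show "restr (emb S y p) S r z = p z"
    proof (cases "z \<in> S \<and> z \<noteq> r")
      case True
      then obtain b' where "p z = Some b'" using st_hasparent[OF st] by blast
      then show ?thesis using True by (simp add: emb_def)
    next
      case False then show ?thesis using b by auto
    qed
  qed
  have st2: "search_tree E2 S r p" using st_cong[OF st ag] .
  show ?thesis
  proof (rule search_tree.intros[OF conn])
    show "y \<in> insert y S" by simp
    show "emb S y p y = None" using yS b(3) by (simp add: emb_def)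
    show "\<forall>z. z \<notin> insert y S \<longrightarrow> emb S y p z = None" using b(3) by (simp add: emb_def)
    show "\<forall>C\<in>components E2 (insert y S - {y}). \<exists>c\<in>C. emb S y p c = Some y \<and> search_tree E2 C c (restr (emb S y p) C c)"
    proof (unfold cs, intro ballI)
      fix C assume "C \<in> {S}"
      then have C: "C = S" by simp
      have er: "emb S y p r = Some y" using b(1,2) by (simp add: emb_def)
      show "\<exists>c\<in>C. emb S y p c = Some y \<and> search_tree E2 C c (restr (emb S y p) C c)"
        unfolding C using b(1) er rr st2 by (intro bexI[of _ r]) auto
    qed
  qed
qed

lemma emb_subtree:
  assumes py: "p y = None" and zy: "z \<noteq> y"
  shows "subtree (emb S y p) z = subtree p z"
proof
  show "subtree (emb S y p) z \<subseteq> subtree p z"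
  proof
    fix a assume "a \<in> subtree (emb S y p) z"
    then have "(par (emb S y p))\<^sup>*\<^sup>* a z" by (simp only: subtree_iff)
    then show "a \<in> subtree p z"
    proof (induction rule: converse_rtranclp_induct)
      case base then show ?case by (rule subtree_self)
    next
      case (step a b)
      show ?case
      proof (cases "a \<in> S \<and> p a = None")
        case True
        then have "b = y" using step(1) by (simp add: emb_def)
        then have "y = z" using subtree_none[OF step(3)[unfolded \<open>b = y\<close>] py] by simp
        then show ?thesis using zy by simp
      next
        case False
        have "emb S y p a = p a" unfolding emb_def using False by (rule if_not_P)
        then have "p a = Some b" using step(1) by simp
        then show ?thesis using step(3) by (rule spt)
      qed
    qed
  qed
  show "subtree p z \<subseteq> subtree (emb S y p) z"
  proof
    fix a assume "a \<in> subtree p z"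
    then have "(par p)\<^sup>*\<^sup>* a z" by (simp only: subtree_iff)
    then show "a \<in> subtree (emb S y p) z"
    proof (induction rule: converse_rtranclp_induct)
      case base then show ?case by (rule subtree_self)
    next
      case (step a b)
      then have "emb S y p a = Some b" by (simp add: emb_def)
      then show ?case using step(3) by (rule spt)
    qed
  qed
qed

lemma emb_rot:
  assumes sym1: "\<forall>a b. E1 a b \<longrightarrow> E1 b a" and st: "search_tree E1 S r p"
    and ag: "\<forall>a\<in>S. \<forall>b\<in>S. E1 a b = E2 a b" and yS: "y \<notin> S" and pw: "p w = Some u"
  shows "emb S y (rotate E1 p u w) = rotate E2 (emb S y p) u w \<and> emb S y p w = Some u"
proof -
  have acyc: "\<forall>a. \<not> (par p)\<^sup>+\<^sup>+ a a" using st_acyc[OF sym1 st] .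
  have uw: "u \<noteq> w" using pw acyc_noself[OF acyc] by metis
  have wS: "w \<in> S" and uS: "u \<in> S" using st_parent[OF st pw] by blast+
  have py: "p y = None" using st_basic[OF st] yS by blast
  have ew: "emb S y p w = Some u" using pw by (simp add: emb_def)
  define q where "q = rotate E1 p u w"
  have qw: "q w = p u" unfolding q_def by (rule rot_w[where p=p, OF pw uw])
  have qu: "q u = Some w" unfolding q_def by (rule rot_u[where p=p, OF pw uw])
  have qo: "\<And>z. z \<noteq> u \<Longrightarrow> z \<noteq> w \<Longrightarrow> q z = (if p z = Some w \<and> (\<exists>t\<in>subtree p z. E1 u t) then Some u else p z)"
    unfolding q_def by (rule rot_o[where p=p, OF pw uw])
  have Rw: "rotate E2 (emb S y p) u w w = emb S y p u" by (rule rot_w[where p="emb S y p", OF ew uw])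
  have Ru: "rotate E2 (emb S y p) u w u = Some w" by (rule rot_u[where p="emb S y p", OF ew uw])
  have Ro: "\<And>z. z \<noteq> u \<Longrightarrow> z \<noteq> w \<Longrightarrow> rotate E2 (emb S y p) u w z =
      (if emb S y p z = Some w \<and> (\<exists>t\<in>subtree (emb S y p) z. E2 u t) then Some u else emb S y p z)"
    by (rule rot_o[where p="emb S y p", OF ew uw])
  have "emb S y q = rotate E2 (emb S y p) u w"
  proof
    fix z
    show "emb S y q z = rotate E2 (emb S y p) u w z"
    proof (cases "z = w")
      case True then show ?thesis using qw Rw wS uS by (simp add: emb_def)
    next
      case zw: False
      show ?thesis
      proof (cases "z = u")
        case True then show ?thesis using qu Ru by (simp add: emb_def)
      next
        case zu: False
        have e1: "(emb S y p z = Some w) = (p z = Some w)" using yS wS by (auto simp: emb_def)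
        show ?thesis
        proof (cases "p z = Some w")
          case True
          have zS: "z \<in> S" using st_parent[OF st True] by blast
          have zy: "z \<noteq> y" using zS yS by blast
          have sub: "subtree (emb S y p) z = subtree p z" by (rule emb_subtree[where p=p and S=S, OF py zy])
          have subS: "subtree p z \<subseteq> S" using st_subtree_sub[OF st zS] .
          have ex: "(\<exists>t\<in>subtree p z. E1 u t) = (\<exists>t\<in>subtree p z. E2 u t)"
          proof (rule bex_cong[OF refl])
            fix t assume "t \<in> subtree p z"
            then have "t \<in> S" using subS by blast
            then show "E1 u t = E2 u t" using ag uS by simp
          qed
          have ez: "emb S y p z = Some w" using True by (simp add: emb_def)
          show ?thesis
          proof (cases "\<exists>t\<in>subtree p z. E1 u t")
            case c: True
            then have "q z = Some u" using qo[OF zu zw] True by simp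
            then have "emb S y q z = Some u" by (simp add: emb_def)
            moreover have "rotate E2 (emb S y p) u w z = Some u" using Ro[OF zu zw] ez sub ex c by simp
            ultimately show ?thesis by simp
          next
            case c: False
            then have "q z = p z" using qo[OF zu zw] by simp
            then have "emb S y q z = emb S y p z" by (simp add: emb_def)
            moreover have "rotate E2 (emb S y p) u w z = emb S y p z" using Ro[OF zu zw] sub ex c by simp
            ultimately show ?thesis by simp
          qed
        next
          case False
          then have "q z = p z" using qo[OF zu zw] by simp
          then have "emb S y q z = emb S y p z" by (simp add: emb_def)
          moreover have "rotate E2 (emb S y p) u w z = emb S y p z" using Ro[OF zu zw] e1 False by simp
          ultimately show ?thesis by simp
        qed
      qed
    qed
  qed
  then show ?thesis using ew q_def by simp
qed

lemma emb_adj: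
  assumes sym1: "\<forall>a b. E1 a b \<longrightarrow> E1 b a" and sym2: "\<forall>a b. E2 a b \<longrightarrow> E2 b a"
    and ag: "\<forall>a\<in>S. \<forall>b\<in>S. E1 a b = E2 a b" and yS: "y \<notin> S" and conn: "connected_on E2 (insert y S)"
    and adj: "rot_adj E1 S p q"
  shows "rot_adj E2 (insert y S) (emb S y p) (emb S y q)"
proof -
  obtain r1 where st1: "search_tree E1 S r1 p" using adj by (auto simp: rot_adj_def rot_vertices_def is_search_tree_def)
  obtain r2 where st2: "search_tree E1 S r2 q" using adj by (auto simp: rot_adj_def rot_vertices_def is_search_tree_def)
  have v1: "emb S y p \<in> rot_vertices E2 (insert y S)"
    using emb_st[OF sym2 st1 ag yS conn] by (auto simp: rot_vertices_def is_search_tree_def)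
  have v2: "emb S y q \<in> rot_vertices E2 (insert y S)"
    using emb_st[OF sym2 st2 ag yS conn] by (auto simp: rot_vertices_def is_search_tree_def)
  have "rot_step E1 p q \<or> rot_step E1 q p" using adj by (simp add: rot_adj_def)
  then have "rot_step E2 (emb S y p) (emb S y q) \<or> rot_step E2 (emb S y q) (emb S y p)"
  proof
    assume "rot_step E1 p q"
    then obtain u w where uw: "p w = Some u" "q = rotate E1 p u w" by (auto simp: rot_step_def)
    have "emb S y q = rotate E2 (emb S y p) u w \<and> emb S y p w = Some u"
      using emb_rot[OF sym1 st1 ag yS uw(1)] uw(2) by simp
    then show ?thesis by (auto simp: rot_step_def)
  next
    assume "rot_step E1 q p"
    then obtain u w where uw: "q w = Some u" "p = rotate E1 q u w" by (auto simp: rot_step_def)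
    have "emb S y p = rotate E2 (emb S y q) u w \<and> emb S y q w = Some u"
      using emb_rot[OF sym1 st2 ag yS uw(1)] uw(2) by simp
    then show ?thesis by (auto simp: rot_step_def)
  qed
  then show ?thesis using v1 v2 by (simp add: rot_adj_def)
qed


lemma star_connected:
  assumes sym: "\<forall>a b. E a b \<longrightarrow> E b a" and vT: "v \<in> T" and st: "\<forall>t\<in>T. t \<noteq> v \<longrightarrow> E v t"
  shows "connected_on E T"
proof -
  have tov: "\<And>a. a \<in> T \<Longrightarrow> (induced E T)\<^sup>*\<^sup>* a v"
  proof -
    fix a assume a: "a \<in> T"
    show "(induced E T)\<^sup>*\<^sup>* a v"
    proof (cases "a = v")
      case False
      then have "E a v" using st a sym by blast
      then have "induced E T a v" using a vT by (simp add: induced_def)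
      then show ?thesis by (rule r_into_rtranclp)
    qed simp
  qed
  have fromv: "\<And>a. a \<in> T \<Longrightarrow> (induced E T)\<^sup>*\<^sup>* v a"
  proof -
    fix a assume a: "a \<in> T"
    show "(induced E T)\<^sup>*\<^sup>* v a"
    proof (cases "a = v")
      case False
      then have "E v a" using st a by blast
      then have "induced E T v a" using a vT by (simp add: induced_def)
      then show ?thesis by (rule r_into_rtranclp)
    qed simp
  qed
  show ?thesis unfolding connected_on_def
    using vT tov fromv by (blast intro: rtranclp_trans)
qed

lemma single_st: "search_tree E {z} z (\<lambda>_. None)"
proof (rule search_tree.intros)
  show "connected_on E {z}" by (simp add: connected_on_def)
  show "\<forall>C\<in>components E ({z} - {z}). \<exists>c\<in>C. (\<lambda>_. None) c = Some z \<and> search_tree E C c (restr (\<lambda>_. None) C c)"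
    by (simp add: components_def)
qed auto

definition pent :: "('a \<Rightarrow> 'a \<Rightarrow> bool) \<Rightarrow> 'a set \<Rightarrow> bool" where
  "pent E T \<longleftrightarrow> (\<exists>p1 p2 p3 p4 p5. rot_adj E T p1 p2 \<and> rot_adj E T p2 p3 \<and> rot_adj E T p3 p4 \<and>
      rot_adj E T p4 p5 \<and> rot_adj E T p5 p1)"

lemma ist: "search_tree E T r p \<Longrightarrow> p \<in> rot_vertices E T"
  by (auto simp: rot_vertices_def is_search_tree_def)

lemma pent_base:
  assumes sym: "\<forall>a b. E a b \<longrightarrow> E b a" and av: "a \<noteq> v" and bv: "b \<noteq> v" and ab: "a \<noteq> b"
    and Eav: "E a v" and Evb: "E v b" and nab: "\<not> E a b"
  shows "pent E {a, v, b}"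
proof -
  have Eva: "E v a" and Ebv: "E b v" using Eav Evb sym by blast+
  have nba: "\<not> E b a" using nab sym by blast
  have ag: "\<forall>s\<in>S. \<forall>t\<in>S. E s t = E s t" for S :: "'a set" by simp
  have c_vb: "connected_on E {v, b}" using star_connected[OF sym, of v "{v, b}"] Evb by simp
  have c_bv: "connected_on E {b, v}" using star_connected[OF sym, of v "{b, v}"] Evb by simp
  have c_av: "connected_on E {a, v}" using star_connected[OF sym, of v "{a, v}"] Eva by simp
  have c_va: "connected_on E {v, a}" using star_connected[OF sym, of v "{v, a}"] Eva by simp
  have c_avb: "connected_on E {a, v, b}" using star_connected[OF sym, of v "{a, v, b}"] Eva Evb by simp
  have c_abv: "connected_on E {a, b, v}" using star_connected[OF sym, of v "{a, b, v}"] Eva Evb by simp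
  have c_bav: "connected_on E {b, a, v}" using star_connected[OF sym, of v "{b, a, v}"] Eva Evb by simp
  have c_bva: "connected_on E {b, v, a}" using star_connected[OF sym, of v "{b, v, a}"] Eva Evb by simp
  define t1 where "t1 = (\<lambda>z. if z = a then Some v else if z = b then Some v else None)"
  define t2 where "t2 = (\<lambda>z. if z = v then Some a else if z = b then Some v else None)"
  define t3 where "t3 = (\<lambda>z. if z = b then Some a else if z = v then Some b else None)"
  define t4 where "t4 = (\<lambda>z. if z = a then Some b else if z = v then Some a else None)"
  define t5 where "t5 = (\<lambda>z. if z = v then Some b else if z = a then Some v else None)"
  have T1: "{a, b, v} = {a, v, b}" "{b, a, v} = {a, v, b}" "{b, v, a} = {a, v, b}" by auto
  have s2a: "search_tree E {v, b} v (emb {b} v (\<lambda>_. None))"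
    using emb_st[OF sym single_st[of E b] ag _ c_vb] bv by simp
  have s2: "search_tree E {a, v, b} a (emb {v, b} a (emb {b} v (\<lambda>_. None)))"
    using emb_st[OF sym s2a ag _ c_avb] av ab by simp
  have e2: "emb {v, b} a (emb {b} v (\<lambda>_. None)) = t2"
    using av bv ab by (auto simp: emb_def t2_def fun_eq_iff)
  have s3a: "search_tree E {b, v} b (emb {v} b (\<lambda>_. None))"
    using emb_st[OF sym single_st[of E v] ag _ c_bv] bv by simp
  have s3: "search_tree E {a, b, v} a (emb {b, v} a (emb {v} b (\<lambda>_. None)))"
    using emb_st[OF sym s3a ag _ c_abv] av ab by simp
  have e3: "emb {b, v} a (emb {v} b (\<lambda>_. None)) = t3"
    using av bv ab by (auto simp: emb_def t3_def fun_eq_iff)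
  have s4a: "search_tree E {a, v} a (emb {v} a (\<lambda>_. None))"
    using emb_st[OF sym single_st[of E v] ag _ c_av] av by simp
  have s4: "search_tree E {b, a, v} b (emb {a, v} b (emb {v} a (\<lambda>_. None)))"
    using emb_st[OF sym s4a ag _ c_bav] bv ab by simp
  have e4: "emb {a, v} b (emb {v} a (\<lambda>_. None)) = t4"
    using av bv ab by (auto simp: emb_def t4_def fun_eq_iff)
  have s5a: "search_tree E {v, a} v (emb {a} v (\<lambda>_. None))"
    using emb_st[OF sym single_st[of E a] ag _ c_va] av by simp
  have s5: "search_tree E {b, v, a} b (emb {v, a} b (emb {a} v (\<lambda>_. None)))"
    using emb_st[OF sym s5a ag _ c_bva] bv ab by simp
  have e5: "emb {v, a} b (emb {a} v (\<lambda>_. None)) = t5"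
    using av bv ab by (auto simp: emb_def t5_def fun_eq_iff)
  have compa: "compo E {a, b} a = {a}"
  proof -
    have "\<And>c. (induced E {a, b})\<^sup>*\<^sup>* a c \<Longrightarrow> c = a"
    proof -
      fix c assume "(induced E {a, b})\<^sup>*\<^sup>* a c"
      then show "c = a"
      proof (induction rule: rtranclp_induct)
        case (step c d) then show ?case using nab by (auto simp: induced_def)
      qed simp
    qed
    then show ?thesis by (auto simp: compo_def)
  qed
  have compb: "compo E {a, b} b = {b}"
  proof -
    have "\<And>c. (induced E {a, b})\<^sup>*\<^sup>* b c \<Longrightarrow> c = b"
    proof -
      fix c assume "(induced E {a, b})\<^sup>*\<^sup>* b c"
      then show "c = b"
      proof (induction rule: rtranclp_induct)
        case (step c d) then show ?case using nba by (auto simp: induced_def)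
      qed simp
    qed
    then show ?thesis by (auto simp: compo_def)
  qed
  have comps: "components E ({a, v, b} - {v}) = {{a}, {b}}"
  proof -
    have "{a, v, b} - {v} = {a, b}" using av bv by auto
    moreover have "components E {a, b} = {{a}, {b}}"
      using compa compb unfolding components_def compo_def[symmetric] by auto
    ultimately show ?thesis by simp
  qed
  have s1: "search_tree E {a, v, b} v t1"
  proof (rule search_tree.intros[OF c_avb])
    show "v \<in> {a, v, b}" by simp
    show "t1 v = None" using av bv by (simp add: t1_def)
    show "\<forall>y. y \<notin> {a, v, b} \<longrightarrow> t1 y = None" by (simp add: t1_def)
    have ra: "restr t1 {a} a = (\<lambda>_. None)" by auto
    have rb: "restr t1 {b} b = (\<lambda>_. None)" by auto
    show "\<forall>C\<in>components E ({a, v, b} - {v}). \<exists>c\<in>C. t1 c = Some v \<and> search_tree E C c (restr t1 C c)"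
      unfolding comps using ra rb single_st[of E a] single_st[of E b] ab by (auto simp: t1_def)
  qed
  have V1: "t1 \<in> rot_vertices E {a, v, b}" using ist[OF s1] .
  have V2: "t2 \<in> rot_vertices E {a, v, b}" using ist[OF s2] e2 by simp
  have V3: "t3 \<in> rot_vertices E {a, v, b}" using ist[OF s3] e3 T1 by simp
  have V4: "t4 \<in> rot_vertices E {a, v, b}" using ist[OF s4] e4 T1 by simp
  have V5: "t5 \<in> rot_vertices E {a, v, b}" using ist[OF s5] e5 T1 by simp
  have r12: "rot_step E t1 t2"
  proof -
    have "t1 a = Some v" by (simp add: t1_def)
    moreover have "t2 = rotate E t1 v a"
      using av bv ab by (auto simp: rotate_def t1_def t2_def fun_eq_iff)
    ultimately show ?thesis unfolding rot_step_def by blast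
  qed
  have r23: "rot_step E t2 t3"
  proof -
    have "t2 b = Some v" using bv by (simp add: t2_def)
    moreover have "t3 = rotate E t2 v b"
      using av bv ab by (auto simp: rotate_def t2_def t3_def fun_eq_iff)
    ultimately show ?thesis unfolding rot_step_def by blast
  qed
  have r34: "rot_step E t3 t4"
  proof -
    have "t3 b = Some a" by (simp add: t3_def)
    moreover have "subtree t3 v = {v}"
      by (rule subtree_leaf) (use av bv ab in \<open>simp add: t3_def\<close>)
    moreover have "t4 = rotate E t3 a b"
      using av bv ab Eav \<open>subtree t3 v = {v}\<close> by (auto simp: rotate_def t3_def t4_def fun_eq_iff)
    ultimately show ?thesis unfolding rot_step_def by blast
  qed
  have r45: "rot_step E t4 t5"
  proof -
    have "t4 v = Some a" using av by (simp add: t4_def)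
    moreover have "t5 = rotate E t4 a v"
      using av bv ab by (auto simp: rotate_def t4_def t5_def fun_eq_iff)
    ultimately show ?thesis unfolding rot_step_def by blast
  qed
  have r51: "rot_step E t5 t1"
  proof -
    have "t5 v = Some b" by (simp add: t5_def)
    moreover have "subtree t5 a = {a}"
      by (rule subtree_leaf) (use av bv ab in \<open>simp add: t5_def\<close>)
    moreover have "t1 = rotate E t5 b v"
      using av bv ab nba \<open>subtree t5 a = {a}\<close> by (auto simp: rotate_def t1_def t5_def fun_eq_iff)
    ultimately show ?thesis unfolding rot_step_def by blast
  qed
  show ?thesis unfolding pent_def rot_adj_def
    using V1 V2 V3 V4 V5 r12 r23 r34 r45 r51 by blast
qed


lemma pent_ext:
  assumes sym: "\<forall>a b. E a b \<longrightarrow> E b a" and vT: "v \<in> T0" and univ: "\<forall>w\<in>V. w \<noteq> v \<longrightarrow> E v w"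
    and T0V: "T0 \<subseteq> V" and p0: "pent E T0"
  shows "finite U \<Longrightarrow> U \<subseteq> V \<Longrightarrow> U \<inter> T0 = {} \<Longrightarrow> pent E (T0 \<union> U)"
proof (induction U rule: finite_induct)
  case empty then show ?case using p0 by simp
next
  case (insert y U)
  have IH: "pent E (T0 \<union> U)" using insert by blast
  have yS: "y \<notin> T0 \<union> U" using insert by blast
  have conn: "connected_on E (insert y (T0 \<union> U))"
  proof (rule star_connected[OF sym])
    show "v \<in> insert y (T0 \<union> U)" using vT by blast
    show "\<forall>t\<in>insert y (T0 \<union> U). t \<noteq> v \<longrightarrow> E v t" using univ insert(4) T0V by blast
  qed
  have ag: "\<forall>a\<in>T0 \<union> U. \<forall>b\<in>T0 \<union> U. E a b = E a b" by simp
  obtain p1 p2 p3 p4 p5 where P: "rot_adj E (T0 \<union> U) p1 p2" "rot_adj E (T0 \<union> U) p2 p3"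
    "rot_adj E (T0 \<union> U) p3 p4" "rot_adj E (T0 \<union> U) p4 p5" "rot_adj E (T0 \<union> U) p5 p1"
    using IH unfolding pent_def by blast
  note em = emb_adj[OF sym sym ag yS conn]
  have "pent E (insert y (T0 \<union> U))"
    unfolding pent_def
    apply (rule exI[of _ "emb (T0 \<union> U) y p1"], rule exI[of _ "emb (T0 \<union> U) y p2"],
        rule exI[of _ "emb (T0 \<union> U) y p3"], rule exI[of _ "emb (T0 \<union> U) y p4"],
        rule exI[of _ "emb (T0 \<union> U) y p5"])
    using em[OF P(1)] em[OF P(2)] em[OF P(3)] em[OF P(4)] em[OF P(5)] by (intro conjI)
  moreover have eq: "T0 \<union> insert y U = insert y (T0 \<union> U)" by blast
  ultimately show ?case unfolding eq by simp
qed

definition colr :: "'b set \<Rightarrow> ('b \<Rightarrow> 'b \<Rightarrow> bool) \<Rightarrow> nat \<Rightarrow> ('b \<Rightarrow> nat) \<Rightarrow> bool" where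
  "colr W A k f \<longleftrightarrow> (\<forall>x\<in>W. f x < k) \<and> (\<forall>x\<in>W. \<forall>y\<in>W. A x y \<longrightarrow> f x \<noteq> f y)"

lemma chi_le: "colr W A k f \<Longrightarrow> chromatic_number W A \<le> k"
  unfolding chromatic_number_def colr_def[symmetric] by (rule Least_le) blast

lemma chi_col: "colr W A k f \<Longrightarrow> \<exists>g. colr W A (chromatic_number W A) g"
  unfolding chromatic_number_def colr_def[symmetric] by (rule LeastI) blast

lemma pent_chi:
  assumes "pent E T" "colr (rot_vertices E T) (rot_adj E T) k f"
  shows "3 \<le> k"
proof (rule ccontr)
  assume k: "\<not> 3 \<le> k"
  obtain p1 p2 p3 p4 p5 where P: "rot_adj E T p1 p2" "rot_adj E T p2 p3"
    "rot_adj E T p3 p4" "rot_adj E T p4 p5" "rot_adj E T p5 p1"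
    using assms(1) unfolding pent_def by blast
  have M: "p1 \<in> rot_vertices E T" "p2 \<in> rot_vertices E T" "p3 \<in> rot_vertices E T"
    "p4 \<in> rot_vertices E T" "p5 \<in> rot_vertices E T" using P by (simp_all add: rot_adj_def)
  have lt: "f p1 < k" "f p2 < k" "f p3 < k" "f p4 < k" "f p5 < k" using assms(2) M by (simp_all add: colr_def)
  have ne: "f p1 \<noteq> f p2" "f p2 \<noteq> f p3" "f p3 \<noteq> f p4" "f p4 \<noteq> f p5" "f p5 \<noteq> f p1"
    using assms(2) M P unfolding colr_def by blast+
  show False using k lt ne by linarith
qed

lemma rot_vertices_finite:
  assumes "finite V"
  shows "finite (rot_vertices E V)"
proof -
  have "rot_vertices E V \<subseteq> {f. \<forall>z. (z \<in> V \<longrightarrow> f z \<in> insert None (Some ` V)) \<and> (z \<notin> V \<longrightarrow> f z = None)}"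
  proof
    fix p assume "p \<in> rot_vertices E V"
    then obtain r where st: "search_tree E V r p" by (auto simp: rot_vertices_def is_search_tree_def)
    show "p \<in> {f. \<forall>z. (z \<in> V \<longrightarrow> f z \<in> insert None (Some ` V)) \<and> (z \<notin> V \<longrightarrow> f z = None)}"
    proof (intro CollectI allI conjI impI)
      fix z assume "z \<in> V"
      show "p z \<in> insert None (Some ` V)"
      proof (cases "p z")
        case (Some b) then show ?thesis using st_parent[OF st Some] by blast
      qed simp
    next
      fix z assume "z \<notin> V" then show "p z = None" using st_basic[OF st] by blast
    qed
  qed
  moreover have "finite {f. \<forall>z. (z \<in> V \<longrightarrow> f z \<in> insert None (Some ` V)) \<and> (z \<notin> V \<longrightarrow> f z = None)}"
    using finite_set_of_finite_funs[OF assms, of "insert None (Some ` V)" None] assms by simp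
  ultimately show ?thesis by (rule finite_subset)
qed

lemma adj_irrefl:
  assumes sym: "\<forall>a b. E a b \<longrightarrow> E b a"
  shows "\<not> rot_adj E V p p"
proof
  assume adj: "rot_adj E V p p"
  then obtain r where st: "search_tree E V r p" by (auto simp: rot_adj_def rot_vertices_def is_search_tree_def)
  have acyc: "\<forall>a. \<not> (par p)\<^sup>+\<^sup>+ a a" using st_acyc[OF sym st] .
  obtain u w where uw: "p w = Some u" "p = rotate E p u w" using adj by (auto simp: rot_adj_def rot_step_def)
  have "rotate E p u w w = p u" by (simp add: rotate_def)
  then have "p u = Some u" using uw by simp
  then show False using acyc_noself[OF acyc] by metis
qed

lemma col_exists:
  assumes "finite R" "\<forall>p. \<not> A p p"
  shows "\<exists>f. colr R A (card R) f"
proof -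
  obtain f where f: "bij_betw f R {0..<card R}" using ex_bij_betw_finite_nat[OF assms(1)] by blast
  have "colr R A (card R) f"
    unfolding colr_def
  proof (intro conjI ballI impI)
    fix p assume "p \<in> R" then show "f p < card R" using f by (auto simp: bij_betw_def)
  next
    fix p q assume pq: "p \<in> R" "q \<in> R" "A p q"
    then have "p \<noteq> q" using assms(2) by metis
    then show "f p \<noteq> f q" using f pq(1,2) by (auto simp: bij_betw_def inj_on_def)
  qed
  then show ?thesis by blast
qed

lemma mod_cancel_aux:
  fixes a l1 l2 k :: nat
  assumes "(a + l2) mod k = (a + l1) mod k" "l2 < k" "l1 \<le> l2"
  shows "l1 = l2"
proof -
  have "a + l2 \<ge> a + l1" using assms(3) by simp
  from mod_eq_nat1E[OF assms(1) this] obtain s where s: "a + l2 = a + l1 + k * s" .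
  then have l: "l2 = l1 + k * s" by simp
  have "s = 0"
  proof (rule ccontr)
    assume "s \<noteq> 0"
    then have "k * s \<ge> k" by simp
    then show False using l assms(2) by linarith
  qed
  then show ?thesis using l by simp
qed

lemma mod_cancel3:
  fixes a l1 l2 k :: nat
  assumes "(a + l1) mod k = (a + l2) mod k" "l1 < k" "l2 < k"
  shows "l1 = l2"
proof (cases "l1 \<le> l2")
  case True then show ?thesis using mod_cancel_aux[OF assms(1)[symmetric] assms(3)] by simp
next
  case False then show ?thesis using mod_cancel_aux[OF assms(1) assms(2)] by simp
qed


context pend
begin

lemma connW: "connected_on F W"
proof (rule star_connected[OF symF])
  show "v \<in> W" using vV by simp
  show "\<forall>t\<in>W. t \<noteq> v \<longrightarrow> F v t" using univF by blast
qed

lemma agreeEF: "\<forall>a\<in>V. \<forall>b\<in>V. E a b = F a b"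
proof (intro ballI)
  fix a b assume "a \<in> V" "b \<in> V"
  then have "a \<noteq> x" "b \<noteq> x" using xV by blast+
  then show "E a b = F a b" using F_nx by simp
qed

lemma upper:
  assumes col: "colr (rot_vertices E V) (rot_adj E V) k c" and k3: "3 \<le> k"
  shows "colr (rot_vertices F W) (rot_adj F W) k (\<lambda>p. (c (phi p) + lab p) mod k)"
proof -
  have step: "(c (phi p) + lab p) mod k \<noteq> (c (phi q) + lab q) mod k"
    if pR: "p \<in> rot_vertices F W" and qR: "q \<in> rot_vertices F W" and rs: "rot_step F p q" for p q
  proof -
    obtain r where st: "search_tree F W r p" using pR by (auto simp: rot_vertices_def is_search_tree_def)
    obtain r2 where st2: "search_tree F W r2 q" using qR by (auto simp: rot_vertices_def is_search_tree_def)
    obtain u w where pw: "p w = Some u" and q: "q = rotate F p u w" using rs by (auto simp: rot_step_def)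
    show ?thesis
    proof (cases "u = x \<or> w = x")
      case True
      have e: "phi q = phi p" and l: "lab q \<noteq> lab p" using kx[OF st pw True] q by simp_all
      show ?thesis
      proof
        assume eq: "(c (phi p) + lab p) mod k = (c (phi q) + lab q) mod k"
        then have "(c (phi p) + lab p) mod k = (c (phi p) + lab q) mod k" using e by simp
        then have "lab p = lab q" using mod_cancel3 lab_lt k3
          by (metis less_le_trans)
        then show False using l by simp
      qed
    next
      case False
      then have ux: "u \<noteq> x" and wx: "w \<noteq> x" by simp_all
      have k: "phi q = rotate E (phi p) u w" "phi p w = Some u" "lab q = lab p"
        using k5[OF st pw ux wx] q by simp_all
      obtain r' where s1: "search_tree E V r' (phi p)" using phi_st[OF st] by blast
      obtain r'' where s2: "search_tree E V r'' (phi q)" using phi_st[OF st2] by blast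
      have "rot_step E (phi p) (phi q)" using k(1,2) by (auto simp: rot_step_def)
      then have adj: "rot_adj E V (phi p) (phi q)" using ist[OF s1] ist[OF s2] by (simp add: rot_adj_def)
      have ne: "c (phi p) \<noteq> c (phi q)" using col ist[OF s1] ist[OF s2] adj by (simp add: colr_def)
      have lt: "c (phi p) < k" "c (phi q) < k" using col ist[OF s1] ist[OF s2] by (simp_all add: colr_def)
      show ?thesis
      proof
        assume eq: "(c (phi p) + lab p) mod k = (c (phi q) + lab q) mod k"
        then have "(lab p + c (phi p)) mod k = (lab p + c (phi q)) mod k" using k(3) by (simp add: add.commute)
        then have "c (phi p) = c (phi q)" using mod_cancel3 lt by blast
        then show False using ne by simp
      qed
    qed
  qed
  show ?thesis unfolding colr_def
  proof (intro conjI ballI impI)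
    fix p show "(c (phi p) + lab p) mod k < k" using k3 by simp
  next
    fix p q assume pR: "p \<in> rot_vertices F W" and qR: "q \<in> rot_vertices F W" and adj: "rot_adj F W p q"
    then have "rot_step F p q \<or> rot_step F q p" by (simp add: rot_adj_def)
    then show "(c (phi p) + lab p) mod k \<noteq> (c (phi q) + lab q) mod k"
    proof
      assume "rot_step F p q" then show ?thesis using step[OF pR qR] by blast
    next
      assume "rot_step F q p" then show ?thesis using step[OF qR pR] by metis
    qed
  qed
qed

lemma lower:
  assumes col: "colr (rot_vertices F W) (rot_adj F W) k c"
  shows "colr (rot_vertices E V) (rot_adj E V) k (\<lambda>p. c (emb V x p))"
  unfolding colr_def
proof (intro conjI ballI impI)
  fix p assume "p \<in> rot_vertices E V"
  then obtain r where st: "search_tree E V r p" by (auto simp: rot_vertices_def is_search_tree_def)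
  have "emb V x p \<in> rot_vertices F W" using ist[OF emb_st[OF symF st agreeEF xV connW]] .
  then show "c (emb V x p) < k" using col by (simp add: colr_def)
next
  fix p q assume pR: "p \<in> rot_vertices E V" and qR: "q \<in> rot_vertices E V" and adj: "rot_adj E V p q"
  have adj': "rot_adj F W (emb V x p) (emb V x q)" by (rule emb_adj[OF symE symF agreeEF xV connW adj])
  then have "emb V x p \<in> rot_vertices F W" "emb V x q \<in> rot_vertices F W" by (simp_all add: rot_adj_def)
  then show "c (emb V x p) \<noteq> c (emb V x q)" using col adj' by (simp add: colr_def)
qed

end

theorem corollary3p3:
  fixes E :: "'a \<Rightarrow> 'a \<Rightarrow> bool" and V :: "'a set" and v x :: 'a
  assumes "finite V"
    and "\<forall>a b. E a b \<longrightarrow> a \<in> V \<and> b \<in> V"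
    and "\<forall>a b. E a b \<longrightarrow> E b a"
    and "\<forall>a. \<not> E a a"
    and "connected_on E V"
    and "\<exists>a\<in>V. \<exists>b\<in>V. a \<noteq> b \<and> \<not> E a b"
    and "v \<in> V" and "\<forall>w\<in>V. w \<noteq> v \<longrightarrow> E v w"
    and "x \<notin> V"
  shows "chromatic_number (rot_vertices E V) (rot_adj E V) =
         chromatic_number (rot_vertices (add_pendant E v x) (insert x V))
                          (rot_adj (add_pendant E v x) (insert x V))"
proof -
  interpret P: pend E V v x
    by (rule pend.intro[OF assms(1) assms(2) assms(3) assms(5) assms(7) assms(8) assms(9)])
  have sym: "\<forall>a b. E a b \<longrightarrow> E b a" by (rule assms(3))
  obtain a b where ab: "a \<in> V" "b \<in> V" "a \<noteq> b" "\<not> E a b" using assms(6) by blast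
  have av: "a \<noteq> v"
  proof
    assume "a = v" then have "E v b" using assms(8) ab by metis
    then show False using ab \<open>a = v\<close> by simp
  qed
  have bv: "b \<noteq> v"
  proof
    assume "b = v" then have "E v a" using assms(8) ab by metis
    then have "E a v" using sym by blast
    then show False using ab \<open>b = v\<close> by simp
  qed
  have Eva: "E v a" using assms(8) ab av by blast
  have Eav: "E a v" using Eva sym by blast
  have Evb: "E v b" using assms(8) ab bv by blast
  have p0: "pent E {a, v, b}" by (rule pent_base[OF sym av bv ab(3) Eav Evb ab(4)])
  have T0V: "{a, v, b} \<subseteq> V" using ab assms(7) by blast
  have "pent E ({a, v, b} \<union> (V - {a, v, b}))"
    by (rule pent_ext[OF sym _ assms(8) T0V p0]) (use assms(1) in auto)
  moreover have "{a, v, b} \<union> (V - {a, v, b}) = V" using T0V by blast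
  ultimately have pV: "pent E V" by simp
  let ?R = "rot_vertices E V" and ?A = "rot_adj E V"
  let ?R' = "rot_vertices (add_pendant E v x) (insert x V)"
  let ?A' = "rot_adj (add_pendant E v x) (insert x V)"
  have finR: "finite ?R" by (rule rot_vertices_finite[OF assms(1)])
  have irr: "\<forall>p. \<not> ?A p p" using adj_irrefl[OF sym] by blast
  obtain f0 where "colr ?R ?A (card ?R) f0" using col_exists[of "?R" "?A", OF finR irr] by blast
  then obtain c where c: "colr ?R ?A (chromatic_number ?R ?A) c" using chi_col by blast
  have k3: "3 \<le> chromatic_number ?R ?A" by (rule pent_chi[OF pV c])
  have up: "colr ?R' ?A' (chromatic_number ?R ?A) (\<lambda>p. (c (P.phi p) + P.lab p) mod (chromatic_number ?R ?A))"
    by (rule P.upper[OF c k3])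
  have le1: "chromatic_number ?R' ?A' \<le> chromatic_number ?R ?A" by (rule chi_le[OF up])
  obtain c' where c': "colr ?R' ?A' (chromatic_number ?R' ?A') c'" using chi_col[OF up] by blast
  have "colr ?R ?A (chromatic_number ?R' ?A') (\<lambda>p. c' (emb V x p))" by (rule P.lower[OF c'])
  then have le2: "chromatic_number ?R ?A \<le> chromatic_number ?R' ?A'" by (rule chi_le)
  show ?thesis using le1 le2 by simp
qed


end
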